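(* Assume (A1), (A2), (A3). Let $x\in\mathcal{C}$ and $\beta>\beta_1(x)$. The gradient-step backtracking procedure (described in the context) started at $x$ terminates with a step size $t\ge\tau_1\min(\underline{\alpha_1},t_1(x))>0$, where $\underline{\alpha_1}=\min\big(\alpha_{01},\tfrac{2(1-c_1)}{L_g}\big)$, and $$g(x)-g(x-t\nabla g(x))\ge c_1\tau_1\min(\underline{\alpha_1},t_1(x))\,\|\nabla g(x)\|^2.$$
   Context: Let $\mathcal{E}$ be a Euclidean space with inner product $\langle\cdot,\cdot\rangle$ and norm $\|\cdot\|$ (2-norm on $\mathbb{R}^m$), and $f\colon\mathcal{E}\to\mathbb{R}$, $h\colon\mathcal{E}\to\mathbb{R}^m$ be $C^\infty$. $\mathrm{D}h(x)$ is the differential, $\mathrm{D}h(x)^*$ its adjoint, $\sigma_1$ and $\sigma_{\min}=\sigma_m$ the largest and $m$-th singular values. $\mathcal{D}=\{x:\operatorname{rank}\mathrm{D}h(x)=m\}$; for $x\in\mathcal{D}$, $\lambda(x)=(\mathrm{D}h(x)^* )^\dagger[\nabla f(x)]$ (Moore–Penrose), smooth on $\mathcal{D}$. For fixed $\beta\ge0$, $g(x)=f(x)-\langle h(x),\lambda(x)\rangle+\beta\|h(x)\|^2$. (A1): there are $R,\underline{\sigma}>0$ with $\sigma_{\min}(\mathrm{D}h(x))\ge\underline{\sigma}$ for all $x\in\mathcal{C}=\{x:\|h(x)\|\le R\}$. (A2): $\{h=0\}$ and $\mathcal{C}$ are compact. (A3): there is $C_h>0$ with $h(x+v)=h(x)+\mathrm{D}h(x)[v]+E(x,v)$,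 $\|E(x,v)\|\le C_h\|v\|^2$ for all $x\in\mathcal{C}$, $v\in\mathcal{E}$. For $x\in\mathcal{C}$: $C_\lambda(x)=\|\mathrm{D}\lambda(x)\|_{\mathrm{op}}$, $\beta_1(x)=\sigma_1(\mathrm{D}h(x))C_\lambda(x)/(2\sigma_{\min}(\mathrm{D}h(x))^2)$, and $t_1(x)=\min\big(\sqrt{R/(2C_h)}/\|\nabla g(x)\|,\ (2\beta\sigma_{\min}(\mathrm{D}h(x))^2-\sigma_1(\mathrm{D}h(x))C_\lambda(x))R/(2C_h\|\nabla g(x)\|^2),\ 1/(2\beta\|\mathrm{D}h(x)\|_{\mathrm{op}}^2)\big)$. $L_g=\max_{x\in\mathcal{C}}\|\nabla^2g(x)\|_{\mathrm{op}}$. Gradient-step backtracking: given $x\in\mathcal{C}$ and parameters $\alpha_{01}>0$, $0<c_1<1$, $0<\tau_1<1$, set $\alpha=\alpha_{01}$; while it is not the case that both $g(x)-g(x-\alpha\nabla g(x))\ge c_1\alpha\|\nabla g(x)\|^2$ and $x-\alpha\nabla g(x)\in\mathcal{C}$, replace $\alpha$ by $\tau_1\alpha$; return $t=\alpha$. *)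

theory Defs
  imports "HOL-Analysis.Analysis"
begin

fun Ck :: "nat \<Rightarrow> ('a::real_normed_vector \<Rightarrow> 'b::real_normed_vector) \<Rightarrow> bool" where
  "Ck 0 F = continuous_on UNIV F"
| "Ck (Suc k) F = ((\<forall>x. F differentiable (at x)) \<and>
      (\<forall>v. Ck k (\<lambda>x. frechet_derivative F (at x) v)))"

definition smooth :: "('a::real_normed_vector \<Rightarrow> 'b::real_normed_vector) \<Rightarrow> bool" where
  "smooth F \<longleftrightarrow> (\<forall>k. Ck k F)"

definition Dif :: "('a::real_normed_vector \<Rightarrow> 'b::real_normed_vector) \<Rightarrow> 'a \<Rightarrow> 'a \<Rightarrow> 'b" where
  "Dif F x = frechet_derivative F (at x)"

definition grad :: "('a::real_inner \<Rightarrow> real) \<Rightarrow> 'a \<Rightarrow> 'a" where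
  "grad F x = (THE D. GDERIV F x :> D)"

text \<open>k-th singular value (k \<ge> 1) of a linear map, via the Courant--Fischer max-min
  characterisation; it is 0 when k exceeds the dimension of the domain.\<close>
definition sing_val :: "nat \<Rightarrow> ('a::euclidean_space \<Rightarrow> 'b::euclidean_space) \<Rightarrow> real" where
  "sing_val k L = (if 1 \<le> k \<and> k \<le> DIM('a) then
      Sup ((\<lambda>V. Inf ((\<lambda>v. norm (L v)) ` {v\<in>V. norm v = 1}))
            ` {V. subspace V \<and> dim V = k})
    else 0)"

definition sigma_max :: "('a::euclidean_space \<Rightarrow> 'b::euclidean_space) \<Rightarrow> real" where
  "sigma_max L = sing_val 1 L"

definition sigma_min :: "('a::euclidean_space \<Rightarrow> 'b::euclidean_space) \<Rightarrow> real" where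
  "sigma_min L = sing_val DIM('b) L"

definition lsq :: "('a::real_normed_vector \<Rightarrow> 'b::real_normed_vector) \<Rightarrow> 'b \<Rightarrow> 'a \<Rightarrow> bool" where
  "lsq A y u \<longleftrightarrow> (\<forall>w. norm (A u - y) \<le> norm (A w - y))"

definition pinv :: "('a::real_normed_vector \<Rightarrow> 'b::real_normed_vector) \<Rightarrow> 'b \<Rightarrow> 'a" where
  "pinv A y = (THE u. lsq A y u \<and> (\<forall>w. lsq A y w \<longrightarrow> norm u \<le> norm w))"

definition Dset :: "('a::euclidean_space \<Rightarrow> 'b::euclidean_space) \<Rightarrow> 'a set" where
  "Dset h = {x. dim (range (Dif h x)) = DIM('b)}"

text \<open>lambda(x) = (Dh(x)^* )^\<dagger> [grad f(x)]  (meaningful on Dset h).\<close>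
definition lam :: "('a::euclidean_space \<Rightarrow> real) \<Rightarrow> ('a \<Rightarrow> 'b::euclidean_space) \<Rightarrow> 'a \<Rightarrow> 'b" where
  "lam f h x = pinv (adjoint (Dif h x)) (grad f x)"

definition gfun :: "('a::euclidean_space \<Rightarrow> real) \<Rightarrow> ('a \<Rightarrow> 'b::euclidean_space) \<Rightarrow> real \<Rightarrow> 'a \<Rightarrow> real" where
  "gfun f h \<beta> x = f x - inner (h x) (lam f h x) + \<beta> * (norm (h x))\<^sup>2"

definition Cset :: "('a::real_normed_vector \<Rightarrow> 'b::real_normed_vector) \<Rightarrow> real \<Rightarrow> 'a set" where
  "Cset h R = {x. norm (h x) \<le> R}"

definition C_lam :: "('a::euclidean_space \<Rightarrow> real) \<Rightarrow> ('a \<Rightarrow> 'b::euclidean_space) \<Rightarrow> 'a \<Rightarrow> real" where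
  "C_lam f h x = onorm (Dif (lam f h) x)"

definition beta1 :: "('a::euclidean_space \<Rightarrow> real) \<Rightarrow> ('a \<Rightarrow> 'b::euclidean_space) \<Rightarrow> 'a \<Rightarrow> real" where
  "beta1 f h x = sigma_max (Dif h x) * C_lam f h x / (2 * (sigma_min (Dif h x))\<^sup>2)"

text \<open>t_1(x); when grad g(x) = 0 the first two terms (positive numbers divided by 0)
  are read as +infinity and dropped from the minimum.\<close>
definition t1 :: "('a::euclidean_space \<Rightarrow> real) \<Rightarrow> ('a \<Rightarrow> 'b::euclidean_space) \<Rightarrow> real \<Rightarrow> real \<Rightarrow> real \<Rightarrow> 'a \<Rightarrow> real" where
  "t1 f h \<beta> R Ch x =
    (let G = grad (gfun f h \<beta>) x;
         third = 1 / (2 * \<beta> * (onorm (Dif h x))\<^sup>2)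
     in if G = 0 then third
        else min (min (sqrt (R / (2 * Ch)) / norm G)
                      ((2 * \<beta> * (sigma_min (Dif h x))\<^sup>2 - sigma_max (Dif h x) * C_lam f h x) * R
                         / (2 * Ch * (norm G)\<^sup>2)))
                 third)"

definition Lg :: "('a::euclidean_space \<Rightarrow> real) \<Rightarrow> ('a \<Rightarrow> 'b::euclidean_space) \<Rightarrow> real \<Rightarrow> real \<Rightarrow> real" where
  "Lg f h \<beta> R = (SUP x\<in>Cset h R. onorm (Dif (grad (gfun f h \<beta>)) x))"

text \<open>underline alpha_1 = min(alpha_01, 2(1-c_1)/L_g); 2(1-c_1)/0 read as +infinity.\<close>
definition alpha1 :: "('a::euclidean_space \<Rightarrow> real) \<Rightarrow> ('a \<Rightarrow> 'b::euclidean_space) \<Rightarrow> real \<Rightarrow> real \<Rightarrow> real \<Rightarrow> real \<Rightarrow> real" where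
  "alpha1 f h \<beta> R a01 c1 =
    (if Lg f h \<beta> R = 0 then a01 else min a01 (2 * (1 - c1) / Lg f h \<beta> R))"

definition bt_accept :: "('a::euclidean_space \<Rightarrow> real) \<Rightarrow> ('a \<Rightarrow> 'b::euclidean_space) \<Rightarrow> real \<Rightarrow> real \<Rightarrow> real \<Rightarrow> 'a \<Rightarrow> real \<Rightarrow> bool" where
  "bt_accept f h \<beta> R c1 x \<alpha> \<longleftrightarrow>
     (let g = gfun f h \<beta>; G = grad g x in
      g x - g (x - \<alpha> *\<^sub>R G) \<ge> c1 * \<alpha> * (norm G)\<^sup>2 \<and> x - \<alpha> *\<^sub>R G \<in> Cset h R)"

text \<open>The loop tries alpha_01 * tau_1^k for k = 0,1,2,...; it terminates iff some trial is
  accepted, and then returns the first accepted one.\<close>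
definition bt_terminates :: "('a::euclidean_space \<Rightarrow> real) \<Rightarrow> ('a \<Rightarrow> 'b::euclidean_space) \<Rightarrow> real \<Rightarrow> real \<Rightarrow> real \<Rightarrow> real \<Rightarrow> real \<Rightarrow> 'a \<Rightarrow> bool" where
  "bt_terminates f h \<beta> R a01 c1 \<tau>1 x \<longleftrightarrow> (\<exists>k. bt_accept f h \<beta> R c1 x (a01 * \<tau>1 ^ k))"

definition bt_step :: "('a::euclidean_space \<Rightarrow> real) \<Rightarrow> ('a \<Rightarrow> 'b::euclidean_space) \<Rightarrow> real \<Rightarrow> real \<Rightarrow> real \<Rightarrow> real \<Rightarrow> real \<Rightarrow> 'a \<Rightarrow> real" where
  "bt_step f h \<beta> R a01 c1 \<tau>1 x = a01 * \<tau>1 ^ (LEAST k. bt_accept f h \<beta> R c1 x (a01 * \<tau>1 ^ k))"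

end

theory Submission
  imports Defs
begin


fun CkU :: "nat \<Rightarrow> 'a set \<Rightarrow> ('a::real_normed_vector \<Rightarrow> 'b::real_normed_vector) \<Rightarrow> bool" where
  "CkU 0 U F = continuous_on U F"
| "CkU (Suc k) U F = ((\<forall>x\<in>U. F differentiable (at x)) \<and> (\<forall>v. CkU k U (\<lambda>x. Dif F x v)))"

lemma CkU_Suc_imp: "CkU (Suc k) U F \<Longrightarrow> CkU k U F"
proof (induction k arbitrary: F)
  case 0
  then show ?case
    by (auto intro!: continuous_at_imp_continuous_on differentiable_imp_continuous_within)
next
  case (Suc k)
  then show ?case by auto
qed

lemma CkU_le: "CkU k U F \<Longrightarrow> j \<le> k \<Longrightarrow> CkU j U F"
proof (induction k)
  case 0 then show ?case by auto
next
  case (Suc k) then show ?case using CkU_Suc_imp le_Suc_eq by blast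
qed

lemma CkU_cont: "CkU k U F \<Longrightarrow> continuous_on U F"
  using CkU_le[of k U F 0] by simp

lemma CkU_hasderiv: "CkU (Suc k) U F \<Longrightarrow> x \<in> U \<Longrightarrow> (F has_derivative Dif F x) (at x)"
  by (auto simp: Dif_def intro!: frechet_derivative_works[THEN iffD1])

lemma Ck_imp_CkU: "Ck k F \<Longrightarrow> CkU k U F"
proof (induction k arbitrary: F)
  case 0 then show ?case by (auto intro: continuous_on_subset)
next
  case (Suc k) then show ?case by (auto simp: Dif_def)
qed

lemma CkU_cong: "open U \<Longrightarrow> (\<And>x. x \<in> U \<Longrightarrow> F x = G x) \<Longrightarrow> CkU k U F \<Longrightarrow> CkU k U G"
proof (induction k arbitrary: F G)
  case 0 then show ?case using continuous_on_cong by force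
next
  case (Suc k)
  have d: "(G has_derivative Dif F x) (at x)" if "x \<in> U" for x
    using has_derivative_transform_within_open[OF CkU_hasderiv[OF Suc.prems(3) that] Suc.prems(1) that]
      Suc.prems(2) by auto
  have e: "Dif G x v = Dif F x v" if "x \<in> U" for x v
    using fun_cong[OF frechet_derivative_at[OF d[OF that]], of v] by (simp add: Dif_def)
  show ?case using Suc.prems d e
    by (auto intro!: Suc.IH[of "\<lambda>x. Dif F x v" "\<lambda>x. Dif G x v" for v] simp: differentiable_def)
qed

lemma CkU_const:
  fixes c :: "'b::real_normed_vector" and U :: "'a::real_normed_vector set"
  shows "CkU k U (\<lambda>x. c)"
proof (induction k arbitrary: c)
  case 0 then show ?case by simp
next
  case (Suc k)
  have "Dif (\<lambda>x::'a. c) x v = 0" for x v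
    using frechet_derivative_at[OF has_derivative_const[of c "at x"]] by (simp add: Dif_def)
  then show ?case using Suc by (simp add: differentiable_const)
qed

lemma CkU_linear: "open U \<Longrightarrow> bounded_linear L \<Longrightarrow> CkU k U F \<Longrightarrow> CkU k U (\<lambda>x. L (F x))"
proof (induction k arbitrary: F)
  case 0 then show ?case
    by (simp add: bounded_linear.continuous_on)
next
  case (Suc k)
  have d: "((\<lambda>x. L (F x)) has_derivative (\<lambda>v. L (Dif F x v))) (at x)" if "x \<in> U" for x
    using bounded_linear.has_derivative[OF Suc.prems(2) CkU_hasderiv[OF Suc.prems(3) that]] .
  have e: "Dif (\<lambda>x. L (F x)) x v = L (Dif F x v)" if "x \<in> U" for x v
    using fun_cong[OF frechet_derivative_at[OF d[OF that]], of v] by (simp add: Dif_def)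
  show ?case using Suc.prems d
    by (auto intro!: CkU_cong[OF Suc.prems(1) e[symmetric]] Suc.IH simp: differentiable_def)
qed

lemma CkU_add: "open U \<Longrightarrow> CkU k U F \<Longrightarrow> CkU k U G \<Longrightarrow> CkU k U (\<lambda>x. F x + G x)"
proof (induction k arbitrary: F G)
  case 0 then show ?case by (simp add: continuous_on_add)
next
  case (Suc k)
  have d: "((\<lambda>x. F x + G x) has_derivative (\<lambda>v. Dif F x v + Dif G x v)) (at x)" if "x \<in> U" for x
    using has_derivative_add[OF CkU_hasderiv[OF Suc.prems(2) that] CkU_hasderiv[OF Suc.prems(3) that]] .
  have e: "Dif (\<lambda>x. F x + G x) x v = Dif F x v + Dif G x v" if "x \<in> U" for x v
    using fun_cong[OF frechet_derivative_at[OF d[OF that]], of v] by (simp add: Dif_def)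
  show ?case using Suc.prems d
    by (auto intro!: CkU_cong[OF Suc.prems(1) e[symmetric]] Suc.IH simp: differentiable_def)
qed

lemma CkU_bilinear:
  fixes prod :: "'b::real_normed_vector \<Rightarrow> 'c::real_normed_vector \<Rightarrow> 'd::real_normed_vector"
  shows "open U \<Longrightarrow> bounded_bilinear prod \<Longrightarrow> CkU k U F \<Longrightarrow> CkU k U G \<Longrightarrow> CkU k U (\<lambda>x. prod (F x) (G x))"
proof (induction k arbitrary: F G)
  case 0 then show ?case by (simp add: bounded_bilinear.continuous_on)
next
  case (Suc k)
  have d: "((\<lambda>x. prod (F x) (G x)) has_derivative (\<lambda>v. prod (F x) (Dif G x v) + prod (Dif F x v) (G x))) (at x)" if "x \<in> U" for x
    using bounded_bilinear.FDERIV[OF Suc.prems(2) CkU_hasderiv[OF Suc.prems(3) that] CkU_hasderiv[OF Suc.prems(4) that]] .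
  have e: "Dif (\<lambda>x. prod (F x) (G x)) x v = prod (F x) (Dif G x v) + prod (Dif F x v) (G x)" if "x \<in> U" for x v
    using fun_cong[OF frechet_derivative_at[OF d[OF that]], of v] by (simp add: Dif_def)
  have "CkU k U F" "CkU k U G" using Suc.prems CkU_Suc_imp by blast+
  then show ?case using Suc.prems d
    by (auto intro!: CkU_cong[OF Suc.prems(1) e[symmetric]] Suc.IH CkU_add simp: differentiable_def)
qed

lemma CkU_sum: assumes "open U" "finite S" "(\<And>i. i \<in> S \<Longrightarrow> CkU k U (F i))" shows "CkU k U (\<lambda>x. \<Sum>i\<in>S. F i x)"
  using assms(2,3)
proof (induction S rule: finite_induct)
  case empty then show ?case by (simp add: CkU_const)
next
  case (insert a S) then show ?case by (simp add: CkU_add assms(1))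
qed

lemma CkU_minus: "open U \<Longrightarrow> CkU k U F \<Longrightarrow> CkU k U (\<lambda>x. - F x)"
  using CkU_linear[of U uminus] bounded_linear_minus[OF bounded_linear_ident] by auto

lemma CkU_diff: "open U \<Longrightarrow> CkU k U F \<Longrightarrow> CkU k U G \<Longrightarrow> CkU k U (\<lambda>x. F x - G x)"
  using CkU_add[of U k F "\<lambda>x. - G x"] CkU_minus by auto

lemma CkU_scaleR: "open U \<Longrightarrow> CkU k U F \<Longrightarrow> CkU k U G \<Longrightarrow> CkU k U (\<lambda>x. F x *\<^sub>R G x)"
  using CkU_bilinear[OF _ bounded_bilinear_scaleR] by blast

lemma CkU_inner: "open U \<Longrightarrow> CkU k U F \<Longrightarrow> CkU k U G \<Longrightarrow> CkU k U (\<lambda>x. inner (F x) (G x))"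
  using CkU_bilinear[OF _ bounded_bilinear_inner] by blast

lemma CkU_mult: "open U \<Longrightarrow> CkU k U F \<Longrightarrow> CkU k U G \<Longrightarrow> CkU k U (\<lambda>x. (F x::real) * G x)"
  using CkU_bilinear[OF _ bounded_bilinear_mult] by blast



lemma lin_expand:
  fixes L :: "'a::euclidean_space \<Rightarrow> 'b::real_vector"
  assumes "linear L"
  shows "L u = (\<Sum>b\<in>Basis. (u \<bullet> b) *\<^sub>R L b)"
proof -
  have "L u = L (\<Sum>b\<in>Basis. (u \<bullet> b) *\<^sub>R b)" by (simp add: euclidean_representation)
  also have "\<dots> = (\<Sum>b\<in>Basis. (u \<bullet> b) *\<^sub>R L b)"
    using assms by (simp add: linear_sum linear_scale)
  finally show ?thesis .
qed

lemma lin_diff_bound: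
  fixes L M :: "'a::euclidean_space \<Rightarrow> 'b::real_normed_vector"
  assumes "linear L" "linear M"
  shows "norm (L u - M u) \<le> norm u * (\<Sum>b\<in>Basis. norm (L b - M b))"
proof -
  have "L u - M u = (\<Sum>b\<in>Basis. (u \<bullet> b) *\<^sub>R (L b - M b))"
    using lin_expand[OF assms(1), of u] lin_expand[OF assms(2), of u]
    by (simp add: scaleR_diff_right sum_subtractf)
  also have "norm \<dots> \<le> (\<Sum>b\<in>Basis. norm ((u \<bullet> b) *\<^sub>R (L b - M b)))" by (rule norm_sum)
  also have "\<dots> \<le> (\<Sum>b\<in>Basis. norm u * norm (L b - M b))"
    by (intro sum_mono) (simp add: Basis_le_norm mult_right_mono)
  finally show ?thesis by (simp add: sum_distrib_left)
qed

lemma local_lower_bound: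
  fixes A :: "'a::real_normed_vector \<Rightarrow> 'b::euclidean_space \<Rightarrow> 'b"
  assumes lin: "\<And>z. linear (A z)" and cont: "\<And>b. b \<in> Basis \<Longrightarrow> continuous (at z0) (\<lambda>z. A z b)"
    and inj: "inj (A z0)"
  shows "\<exists>c>0. \<exists>d>0. \<forall>z. dist z z0 < d \<longrightarrow> (\<forall>u. c * norm u \<le> norm (A z u))"
proof -
  obtain c0 where c0: "c0 > 0" "\<And>u. c0 * norm u \<le> norm (A z0 u)"
    using linear_inj_bounded_below_pos[OF lin inj] by blast
  define S where "S z = (\<Sum>b\<in>Basis. norm (A z b - A z0 b))" for z
  have "continuous (at z0) S" unfolding S_def
    by (intro continuous_intros cont)
  then obtain d where d: "d > 0" "\<And>z. dist z z0 < d \<Longrightarrow> dist (S z) (S z0) < c0/2"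
    unfolding continuous_at_eps_delta using c0 by (metis half_gt_zero)
  have S0: "S z0 = 0" by (simp add: S_def)
  have "\<forall>u. c0/2 * norm u \<le> norm (A z u)" if "dist z z0 < d" for z
  proof
    fix u
    have Sz: "S z < c0/2" "S z \<ge> 0" using d(2)[OF that] S0 by (auto simp: S_def intro: sum_nonneg)
    have "norm (A z u - A z0 u) \<le> norm u * S z"
      unfolding S_def by (rule lin_diff_bound[OF lin lin])
    also have "\<dots> \<le> norm u * (c0/2)" using Sz by (intro mult_left_mono) auto
    finally have "norm (A z u - A z0 u) \<le> norm u * (c0/2)" .
    moreover have "norm (A z0 u) \<le> norm (A z u) + norm (A z u - A z0 u)"
      using norm_triangle_sub[of "A z0 u" "A z u"] by (simp add: norm_minus_commute)
    ultimately show "c0/2 * norm u \<le> norm (A z u)" using c0(2)[of u] mult.commute[of "c0/2" "norm u"] by argo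
  qed
  then show ?thesis using c0 d by (metis half_gt_zero)
qed



lemma cont_apply_lin:
  fixes A :: "'a::real_normed_vector \<Rightarrow> 'b::euclidean_space \<Rightarrow> 'c::real_normed_vector"
  assumes lin: "\<And>z. linear (A z)" and cont: "\<And>b. b \<in> Basis \<Longrightarrow> continuous (at z0) (\<lambda>z. A z b)"
  shows "continuous (at z0) (\<lambda>z. A z u)"
proof -
  have "continuous (at z0) (\<lambda>z. \<Sum>b\<in>Basis. (u \<bullet> b) *\<^sub>R A z b)"
    by (intro continuous_intros cont)
  moreover have "(\<lambda>z. A z u) = (\<lambda>z. \<Sum>b\<in>Basis. (u \<bullet> b) *\<^sub>R A z b)"
    using lin_expand[OF lin] by blast
  ultimately show ?thesis by simp
qed

lemma solve_cont:
  fixes A :: "'a::real_normed_vector \<Rightarrow> 'b::euclidean_space \<Rightarrow> 'b"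
  assumes lin: "\<And>z. linear (A z)" and cont: "\<And>b. b \<in> Basis \<Longrightarrow> continuous (at z0) (\<lambda>z. A z b)"
    and inj: "inj (A z0)" and wc: "continuous (at z0) w"
    and ev: "eventually (\<lambda>z. A z (u z) = w z) (at z0)" and e0: "A z0 (u z0) = w z0"
  shows "continuous (at z0) u"
proof -
  obtain c d where cd: "c > 0" "d > 0" "\<And>z u. dist z z0 < d \<Longrightarrow> c * norm u \<le> norm (A z u)"
    using local_lower_bound[OF lin cont inj] by blast
  have ev2: "eventually (\<lambda>z. norm (u z - u z0) \<le> norm (w z - A z (u z0)) / c) (at z0)"
  proof -
    have "eventually (\<lambda>z. dist z z0 < d) (at z0)" using cd(2) eventually_at by blast
    then show ?thesis using ev
    proof eventually_elim
      case (elim z)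
      have "c * norm (u z - u z0) \<le> norm (A z (u z - u z0))" using cd(3) elim(1) by blast
      also have "A z (u z - u z0) = w z - A z (u z0)" using elim(2) lin by (simp add: linear_diff)
      finally show ?case using cd(1) by (simp add: field_simps)
    qed
  qed
  have "((\<lambda>z. norm (w z - A z (u z0)) / c) \<longlongrightarrow> norm (w z0 - A z0 (u z0)) / c) (at z0)"
    using wc cont_apply_lin[OF lin cont, of "u z0"] cd(1)
    by (intro tendsto_intros) (auto simp: continuous_at)
  then have "((\<lambda>z. norm (w z - A z (u z0)) / c) \<longlongrightarrow> 0) (at z0)" using e0 by simp
  then have "((\<lambda>z. u z - u z0) \<longlongrightarrow> 0) (at z0)"
    by (rule Lim_null_comparison[OF ev2])
  then show ?thesis unfolding continuous_at by (rule LIM_zero_cancel)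
qed



lemma grp_aux:
  fixes a0u :: "'a::ab_group_add"
  shows "a0u = Ayu - S1 \<Longrightarrow> S1 = S2 + S3 \<Longrightarrow> S4 = S2 - T \<Longrightarrow> a0L = wd - T \<Longrightarrow> Ayu = wy \<Longrightarrow> a0u0 = w0
   \<Longrightarrow> a0u - a0u0 - a0L = (wy - w0 - wd) - S4 - S3"
  by (hypsubst_thin, simp add: algebra_simps)

lemma solve_deriv:
  fixes A :: "'a::real_normed_vector \<Rightarrow> 'b::euclidean_space \<Rightarrow> 'b"
  assumes lin: "\<And>z. linear (A z)"
    and dA: "\<And>b. b \<in> Basis \<Longrightarrow> ((\<lambda>z. A z b) has_derivative Ab' b) (at z0)"
    and inj: "inj (A z0)" and dw: "(w has_derivative w') (at z0)"
    and uc: "continuous (at z0) u"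
    and ev: "eventually (\<lambda>z. A z (u z) = w z) (at z0)" and e0: "A z0 (u z0) = w z0"
  shows "\<exists>L. (u has_derivative L) (at z0) \<and>
     (\<forall>v. A z0 (L v) = w' v - (\<Sum>b\<in>Basis. (u z0 \<bullet> b) *\<^sub>R Ab' b v))"
proof -
  define A0 where "A0 = A z0"
  define u0 where "u0 = u z0"
  obtain Ai where Ai: "linear Ai" "Ai \<circ> A0 = id"
    using linear_injective_left_inverse[OF lin[of z0] inj] unfolding A0_def by blast
  have Ai2: "A0 \<circ> Ai = id" using linear_inverse_left[OF lin[of z0, folded A0_def] Ai(1)] Ai(2) by blast
  have AiA: "Ai (A0 x) = x" for x using Ai(2) by (metis comp_apply id_apply)
  have AAi: "A0 (Ai x) = x" for x using Ai2 by (metis comp_apply id_apply)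
  obtain K where K: "K > 0" "\<And>x. norm (Ai x) \<le> K * norm x"
    using linear_bounded_pos[OF Ai(1)] by blast
  have Kx: "norm x \<le> K * norm (A0 x)" for x using K(2)[of "A0 x"] AiA by simp
  have blAb: "bounded_linear (Ab' b)" if "b \<in> Basis" for b using dA[OF that] has_derivative_bounded_linear by blast
  have blw: "bounded_linear w'" using dw has_derivative_bounded_linear by blast
  define L where "L v = Ai (w' v - (\<Sum>b\<in>Basis. (u0 \<bullet> b) *\<^sub>R Ab' b v))" for v
  have blL: "bounded_linear L"
  proof -
    have "bounded_linear (\<lambda>v. w' v - (\<Sum>b\<in>Basis. (u0 \<bullet> b) *\<^sub>R Ab' b v))"
      by (intro bounded_linear_sub blw bounded_linear_sum bounded_linear_compose[OF bounded_linear_scaleR_right] blAb)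
    then show ?thesis unfolding L_def
      using bounded_linear_compose[of Ai] Ai(1) linear_conv_bounded_linear by blast
  qed
  have AL: "A0 (L v) = w' v - (\<Sum>b\<in>Basis. (u0 \<bullet> b) *\<^sub>R Ab' b v)" for v
    unfolding L_def AAi ..
  obtain B where B: "\<And>b. b \<in> Basis \<Longrightarrow> B b \<ge> 0 \<and> (\<forall>x. norm (Ab' b x) \<le> B b * norm x)"
  proof -
    have "\<forall>b\<in>Basis. \<exists>c. c \<ge> 0 \<and> (\<forall>x. norm (Ab' b x) \<le> c * norm x)"
      using blAb onorm onorm_pos_le by blast
    then show thesis using that by metis
  qed
  define rw where "rw y = norm (w y - w z0 - w' (y - z0)) / norm (y - z0)" for y
  define rA where "rA b y = norm (A y b - A z0 b - Ab' b (y - z0)) / norm (y - z0)" for b y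
  have rw0: "(rw \<longlongrightarrow> 0) (at z0)" using dw unfolding has_derivative_iff_norm rw_def by simp
  have rA0: "(rA b \<longlongrightarrow> 0) (at z0)" if "b \<in> Basis" for b
    using dA[OF that] unfolding has_derivative_iff_norm rA_def by simp
  have u0l: "((\<lambda>y. norm (u y - u0)) \<longlongrightarrow> 0) (at z0)"
    using uc unfolding continuous_at u0_def by (simp add: LIM_zero_iff tendsto_norm_zero)
  define G where "G y = K * (rw y + (\<Sum>b\<in>Basis. \<bar>u0 \<bullet> b\<bar> * rA b y) + (\<Sum>b\<in>Basis. norm (u y - u0) * (rA b y + B b)))" for y
  have G0: "(G \<longlongrightarrow> 0) (at z0)"
  proof -
    have "(G \<longlongrightarrow> K * (0 + (\<Sum>b\<in>Basis. \<bar>u0 \<bullet> b\<bar> * 0) + (\<Sum>b\<in>Basis. 0 * (0 + B b)))) (at z0)"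
      unfolding G_def by (intro tendsto_intros rw0 rA0 u0l) auto
    then show ?thesis by simp
  qed
  have evb: "eventually (\<lambda>y. norm (norm ((u y - u z0) - L (y - z0)) / norm (y - z0)) \<le> G y) (at z0)"
    using ev
  proof eventually_elim
    case (elim y)
    show ?case
    proof (cases "y = z0")
      case True then show ?thesis
        using K by (simp add: G_def rw_def rA_def sum_nonneg u0_def)
    next
      case False
      define d where "d = y - z0"
      have nd: "norm d > 0" using False by (simp add: d_def)
      have eq: "A0 (u y - u0 - L d) = (w y - w z0 - w' d) - (\<Sum>b\<in>Basis. (u0 \<bullet> b) *\<^sub>R (A y b - A z0 b - Ab' b d))
             - (\<Sum>b\<in>Basis. ((u y - u0) \<bullet> b) *\<^sub>R (A y b - A z0 b))"
      proof -
        have l0: "linear A0" using lin A0_def by simp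
        have a: "A0 (u y - u0 - L d) = A0 (u y) - A0 u0 - A0 (L d)" using l0 by (simp add: linear_diff)
        have b: "A0 (u y) = A y (u y) - (\<Sum>b\<in>Basis. (u y \<bullet> b) *\<^sub>R (A y b - A z0 b))"
          using lin_expand[OF lin[of y], of "u y"] lin_expand[OF lin[of z0], of "u y"]
          by (simp add: A0_def scaleR_diff_right sum_subtractf)
        have c: "(\<Sum>b\<in>Basis. (u y \<bullet> b) *\<^sub>R (A y b - A z0 b)) = (\<Sum>b\<in>Basis. (u0 \<bullet> b) *\<^sub>R (A y b - A z0 b))
           + (\<Sum>b\<in>Basis. ((u y - u0) \<bullet> b) *\<^sub>R (A y b - A z0 b))"
          by (simp add: inner_diff_left scaleR_diff_left sum_subtractf)
        have e: "(\<Sum>b\<in>Basis. (u0 \<bullet> b) *\<^sub>R (A y b - A z0 b - Ab' b d)) = (\<Sum>b\<in>Basis. (u0 \<bullet> b) *\<^sub>R (A y b - A z0 b)) - (\<Sum>b\<in>Basis. (u0 \<bullet> b) *\<^sub>R Ab' b d)"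
          by (simp add: scaleR_diff_right sum_subtractf)
        show ?thesis unfolding a
          by (rule grp_aux[OF b c e AL[of d] elim]) (simp add: e0 A0_def u0_def)
      qed
      have "norm (u y - u0 - L d) \<le> K * norm (A0 (u y - u0 - L d))" by (rule Kx)
      also have "norm (A0 (u y - u0 - L d)) \<le> norm (w y - w z0 - w' d) + (\<Sum>b\<in>Basis. \<bar>u0 \<bullet> b\<bar> * norm (A y b - A z0 b - Ab' b d))
          + (\<Sum>b\<in>Basis. norm (u y - u0) * norm (A y b - A z0 b))"
      proof -
        have t1: "norm (\<Sum>b\<in>Basis. (u0 \<bullet> b) *\<^sub>R (A y b - A z0 b - Ab' b d)) \<le> (\<Sum>b\<in>Basis. \<bar>u0 \<bullet> b\<bar> * norm (A y b - A z0 b - Ab' b d))"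
          by (rule order_trans[OF norm_sum]) simp
        have t2: "norm (\<Sum>b\<in>Basis. ((u y - u0) \<bullet> b) *\<^sub>R (A y b - A z0 b)) \<le> (\<Sum>b\<in>Basis. norm (u y - u0) * norm (A y b - A z0 b))"
          by (rule order_trans[OF norm_sum]) (auto intro!: sum_mono mult_right_mono simp: Basis_le_norm)
        show ?thesis unfolding eq using t1 t2 norm_triangle_ineq4
          by (smt (verit, best) norm_triangle_ineq4)
      qed
      finally have n1: "norm (u y - u0 - L d) \<le> K * (norm (w y - w z0 - w' d) + (\<Sum>b\<in>Basis. \<bar>u0 \<bullet> b\<bar> * norm (A y b - A z0 b - Ab' b d))
          + (\<Sum>b\<in>Basis. norm (u y - u0) * norm (A y b - A z0 b)))" using K by (simp add: mult_left_mono)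
      have n2: "norm (A y b - A z0 b) \<le> (rA b y + B b) * norm d" if "b \<in> Basis" for b
      proof -
        have "norm (A y b - A z0 b) \<le> norm (A y b - A z0 b - Ab' b d) + norm (Ab' b d)"
          by (metis diff_add_cancel norm_triangle_ineq)
        also have "norm (A y b - A z0 b - Ab' b d) = rA b y * norm d" using nd by (simp add: rA_def d_def)
        finally show ?thesis using B[OF that] by (simp add: algebra_simps) (smt (verit))
      qed
      have "norm (u y - u0 - L d) / norm d \<le> G y"
      proof -
        have "(\<Sum>b\<in>Basis. norm (u y - u0) * norm (A y b - A z0 b)) \<le> (\<Sum>b\<in>Basis. norm (u y - u0) * (rA b y + B b)) * norm d"
          unfolding sum_distrib_right by (intro sum_mono) (simp add: n2 mult.assoc mult_left_mono)
        moreover have "norm (w y - w z0 - w' d) = rw y * norm d" using nd by (simp add: rw_def d_def)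
        moreover have "(\<Sum>b\<in>Basis. \<bar>u0 \<bullet> b\<bar> * norm (A y b - A z0 b - Ab' b d)) = (\<Sum>b\<in>Basis. \<bar>u0 \<bullet> b\<bar> * rA b y) * norm d"
          unfolding sum_distrib_right using nd by (intro sum.cong) (auto simp: rA_def d_def)
        ultimately have "norm (u y - u0 - L d) \<le> G y * norm d"
          using n1 K unfolding G_def
          by (smt (verit, ccfv_SIG) distrib_right mult.assoc mult_left_mono)
        then show ?thesis using nd by (simp add: divide_le_eq)
      qed
      then show ?thesis by (simp add: d_def u0_def)
    qed
  qed
  have "((\<lambda>y. norm ((u y - u z0) - L (y - z0)) / norm (y - z0)) \<longlongrightarrow> 0) (at z0)"
    by (rule Lim_null_comparison[OF evb G0])
  then have "(u has_derivative L) (at z0)" using blL unfolding has_derivative_iff_norm by simp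
  then show ?thesis using AL unfolding A0_def u0_def by blast
qed



lemma CkU_solve:
  fixes A :: "'a::real_normed_vector \<Rightarrow> 'b::euclidean_space \<Rightarrow> 'b"
  assumes U: "open U" and lin: "\<And>z. linear (A z)"
    and inj: "\<And>z. z \<in> U \<Longrightarrow> inj (A z)"
  shows "(\<And>b. b \<in> Basis \<Longrightarrow> CkU k U (\<lambda>z. A z b)) \<Longrightarrow> CkU k U w
     \<Longrightarrow> (\<And>z. z \<in> U \<Longrightarrow> A z (u z) = w z) \<Longrightarrow> CkU k U u"
proof (induction k arbitrary: w u)
  case 0
  show ?case
  proof (simp only: CkU.simps, intro continuous_at_imp_continuous_on ballI)
    fix z0 assume z0: "z0 \<in> U"
    have c: "continuous (at z0) (\<lambda>z. A z b)" if "b \<in> Basis" for b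
      using 0(1)[OF that] U z0 continuous_on_eq_continuous_at by auto
    have wc: "continuous (at z0) w" using 0(2) U z0 continuous_on_eq_continuous_at by auto
    have ev: "eventually (\<lambda>z. A z (u z) = w z) (at z0)"
      using eventually_at_in_open'[OF U z0] by (rule eventually_mono) (simp add: 0(3))
    show "continuous (at z0) u"
      by (rule solve_cont[OF lin c inj[OF z0] wc ev 0(3)[OF z0]])
  qed
next
  case (Suc k)
  have ck: "CkU k U (\<lambda>z. A z b)" if "b \<in> Basis" for b using Suc.prems(1)[OF that] CkU_Suc_imp by blast
  have wk: "CkU k U w" using Suc.prems(2) CkU_Suc_imp by blast
  have uk: "CkU k U u" by (rule Suc.IH[OF ck wk Suc.prems(3)])
  have ucont: "continuous_on U u" using CkU_cont[OF uk] .
  have D: "(u has_derivative Dif u z0) (at z0) \<and>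
     (\<forall>v. A z0 (Dif u z0 v) = Dif w z0 v - (\<Sum>b\<in>Basis. (u z0 \<bullet> b) *\<^sub>R Dif (\<lambda>z. A z b) z0 v))"
    if z0: "z0 \<in> U" for z0
  proof -
    have dA: "((\<lambda>z. A z b) has_derivative Dif (\<lambda>z. A z b) z0) (at z0)" if "b \<in> Basis" for b
      using CkU_hasderiv[OF Suc.prems(1)[OF that] z0] .
    have dw: "(w has_derivative Dif w z0) (at z0)" using CkU_hasderiv[OF Suc.prems(2) z0] .
    have uc: "continuous (at z0) u" using ucont U z0 continuous_on_eq_continuous_at by auto
    have ev: "eventually (\<lambda>z. A z (u z) = w z) (at z0)"
      using eventually_at_in_open'[OF U z0] by (rule eventually_mono) (simp add: Suc.prems(3))
    obtain L where L: "(u has_derivative L) (at z0)"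
      "\<forall>v. A z0 (L v) = Dif w z0 v - (\<Sum>b\<in>Basis. (u z0 \<bullet> b) *\<^sub>R Dif (\<lambda>z. A z b) z0 v)"
      using solve_deriv[OF lin dA inj[OF z0] dw uc ev Suc.prems(3)[OF z0]] by blast
    have "L = Dif u z0" using frechet_derivative_at[OF L(1)] by (simp add: Dif_def)
    then show ?thesis using L by simp
  qed
  show ?case
  proof (simp, intro conjI ballI allI)
    fix z assume "z \<in> U" then show "u differentiable at z" using D differentiable_def by blast
  next
    fix v
    define wt where "wt z = Dif w z v - (\<Sum>b\<in>Basis. (u z \<bullet> b) *\<^sub>R Dif (\<lambda>z. A z b) z v)" for z
    have "CkU k U wt" unfolding wt_def
      using Suc.prems(1,2) uk
      by (intro CkU_diff CkU_sum CkU_scaleR CkU_inner CkU_const U) auto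
    note IH2 = Suc.IH[OF ck this, of "\<lambda>z. Dif u z v"]
    show "CkU k U (\<lambda>z. Dif u z v)"
      by (rule IH2) (use D in \<open>auto simp: wt_def\<close>)
  qed
qed



lemma unitset_nonempty:
  fixes V :: "'a::euclidean_space set"
  assumes "subspace V" "dim V \<ge> 1"
  shows "\<exists>v\<in>V. norm v = 1"
proof -
  have "V \<noteq> {0}" using assms by (metis dim_singleton le_numeral_extra(2) le_zero_eq one_neq_zero)
  then obtain v where v: "v \<in> V" "v \<noteq> 0" using assms(1) subspace_0 by blast
  then have "v /\<^sub>R norm v \<in> V" "norm (v /\<^sub>R norm v) = 1" using assms(1) by (auto simp: subspace_scale)
  then show ?thesis by blast
qed

lemma sv_set_props:
  fixes L :: "'a::euclidean_space \<Rightarrow> 'b::euclidean_space"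
  assumes lin: "linear L" and k: "1 \<le> k" "k \<le> DIM('a)"
  defines "S \<equiv> (\<lambda>V. Inf ((\<lambda>v. norm (L v)) ` {v\<in>V. norm v = 1})) ` {V. subspace V \<and> dim V = k}"
  shows "S \<noteq> {}" "bdd_above S"
    "\<And>V v. subspace V \<Longrightarrow> dim V = k \<Longrightarrow> v \<in> V \<Longrightarrow> norm v = 1 \<Longrightarrow> Inf ((\<lambda>v. norm (L v)) ` {v\<in>V. norm v = 1}) \<le> norm (L v)"
proof -
  obtain V :: "'a set" where "subspace V" "dim V = k"
    using choose_subspace_of_subspace[of k "UNIV::'a set"] k by auto
  then show "S \<noteq> {}" unfolding S_def by blast
  show lower: "Inf ((\<lambda>v. norm (L v)) ` {v\<in>V. norm v = 1}) \<le> norm (L v)"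
    if "subspace V" "dim V = k" "v \<in> V" "norm v = 1" for V v
    by (rule cInf_lower) (use that in \<open>auto intro!: bdd_belowI2[where m=0]\<close>)
  show "bdd_above S" unfolding S_def
  proof (rule bdd_aboveI2)
    fix V :: "'a set" assume V: "V \<in> {V. subspace V \<and> dim V = k}"
    then obtain v where v: "v \<in> V" "norm v = 1" using unitset_nonempty k by auto
    have "norm (L v) \<le> onorm L * norm v" using onorm lin linear_conv_bounded_linear by blast
    then show "Inf ((\<lambda>v. norm (L v)) ` {v\<in>V. norm v = 1}) \<le> onorm L"
      using lower[of V v] V v by auto
  qed
qed

lemma sigma_max_bound:
  fixes L :: "'a::euclidean_space \<Rightarrow> 'b::euclidean_space"
  assumes lin: "linear L"
  shows "norm (L v) \<le> sigma_max L * norm v"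
proof (cases "v = 0")
  case True then show ?thesis using lin by (simp add: linear_0)
next
  case False
  define S where "S = (\<lambda>V. Inf ((\<lambda>v. norm (L v)) ` {v\<in>V. norm v = (1::real)})) ` {V. subspace V \<and> dim V = 1}"
  have k: "1 \<le> (1::nat)" "1 \<le> DIM('a)" by (auto simp: DIM_positive)
  have sm: "sigma_max L = Sup S" unfolding sigma_max_def sing_val_def S_def using k by simp
  note P = sv_set_props[OF lin k, folded S_def]
  define V where "V = span {v}"
  have V: "subspace V" "dim V = 1" using False by (auto simp: V_def)
  have "(\<lambda>v. norm (L v)) ` {w\<in>V. norm w = 1} = {norm (L v) / norm v}"
  proof
    show "(\<lambda>v. norm (L v)) ` {w\<in>V. norm w = 1} \<subseteq> {norm (L v) / norm v}"
    proof clarify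
      fix w assume w: "w \<in> V" "norm w = 1"
      then obtain a where a: "w = a *\<^sub>R v" unfolding V_def by (auto simp: span_singleton)
      then have "\<bar>a\<bar> * norm v = 1" using w by simp
      then show "norm (L w) = norm (L v) / norm v" using a lin False
        by (simp add: linear_scale field_simps)
    qed
    have "v /\<^sub>R norm v \<in> V" "norm (v /\<^sub>R norm v) = 1" using False by (auto simp: V_def span_base span_scale)
    moreover have "norm (L (v /\<^sub>R norm v)) = norm (L v) / norm v" using lin by (simp add: linear_scale divide_inverse_commute)
    ultimately show "{norm (L v) / norm v} \<subseteq> (\<lambda>v. norm (L v)) ` {w\<in>V. norm w = 1}" by force
  qed
  then have "Inf ((\<lambda>v. norm (L v)) ` {w\<in>V. norm w = 1}) = norm (L v) / norm v" by simp
  then have "norm (L v) / norm v \<in> S" unfolding S_def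
    by (intro image_eqI[where x=V]) (use V in auto)
  then have "norm (L v) / norm v \<le> sigma_max L" unfolding sm using P(2) by (rule cSup_upper)
  then show ?thesis using False by (simp add: divide_le_eq)
qed

lemma sigma_min_bound:
  fixes L :: "'a::euclidean_space \<Rightarrow> 'b::euclidean_space"
  assumes lin: "linear L" and pos: "sigma_min L > 0"
  shows "sigma_min L * norm y \<le> norm (adjoint L y)"
proof (rule ccontr)
  assume "\<not> ?thesis"
  then have lt: "norm (adjoint L y) < sigma_min L * norm y" by simp
  have k: "1 \<le> DIM('b)" "DIM('b) \<le> DIM('a)"
    using pos by (auto simp: sigma_min_def sing_val_def split: if_splits)
  define S where "S = (\<lambda>V. Inf ((\<lambda>v. norm (L v)) ` {v\<in>V. norm v = (1::real)})) ` {V. subspace V \<and> dim V = DIM('b)}"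
  have sm: "sigma_min L = Sup S" unfolding sigma_min_def sing_val_def S_def using k by simp
  note P = sv_set_props[OF lin k, folded S_def]
  have y0: "y \<noteq> 0" using lt by auto
  define s where "s = norm (adjoint L y) / norm y"
  have s0: "s \<ge> 0" by (simp add: s_def)
  have "s < Sup S" using lt y0 sm by (simp add: s_def divide_less_eq)
  then obtain V where V: "subspace V" "dim V = DIM('b)" and sI: "s < Inf ((\<lambda>v. norm (L v)) ` {v\<in>V. norm v = 1})"
    using less_cSup_iff[OF P(1,2)] unfolding S_def by auto
  define I where "I = Inf ((\<lambda>v. norm (L v)) ` {v\<in>V. norm v = 1})"
  have I0: "I > 0" using sI s0 by (simp add: I_def)
  have low: "I * norm v \<le> norm (L v)" if "v \<in> V" for v
  proof (cases "v = 0")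
    case True then show ?thesis using lin by (simp add: linear_0)
  next
    case False
    have "v /\<^sub>R norm v \<in> V" "norm (v /\<^sub>R norm v) = 1" using False that V(1) by (auto simp: subspace_scale)
    then have "I \<le> norm (L (v /\<^sub>R norm v))" unfolding I_def using P(3)[OF V] by blast
    also have "\<dots> = norm (L v) / norm v" using lin by (simp add: linear_scale divide_inverse_commute)
    finally show ?thesis using False by (simp add: le_divide_eq)
  qed
  have injV: "inj_on L V"
  proof (rule inj_onI)
    fix v w assume vw: "v \<in> V" "w \<in> V" "L v = L w"
    have "v - w \<in> V" using vw V(1) subspace_diff by blast
    then have "I * norm (v - w) \<le> norm (L (v - w))" by (rule low)
    also have "L (v - w) = 0" using vw lin by (simp add: linear_diff)
    finally show "v = w" using I0 by (simp add: mult_le_0_iff)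
  qed
  have "dim (L ` V) = dim V" using dim_image_eq[OF lin, of V] injV V(1) span_eq_iff by metis
  then have "dim (L ` V) = DIM('b)" using V by simp
  then have "span (L ` V) = UNIV" using dim_eq_full by blast
  moreover have "span (L ` V) = L ` V" using span_linear_image[OF lin, of V] V(1) span_eq_iff by metis
  ultimately have "L ` V = UNIV" by simp
  then obtain v where v: "v \<in> V" "L v = y" by (metis UNIV_I imageE)
  have "norm y * norm y = v \<bullet> adjoint L y" using adjoint_works[OF lin, of v y] v by (simp add: dot_square_norm power2_eq_square)
  also have "\<dots> \<le> norm v * norm (adjoint L y)" by (rule Cauchy_Schwarz_ineq2[THEN abs_le_D1])
  also have "norm v \<le> norm y / I" using low[OF v(1)] v(2) I0 by (simp add: le_divide_eq mult.commute)
  then have "norm v * norm (adjoint L y) \<le> norm y / I * (s * norm y)"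
    using y0 I0 by (intro mult_mono) (auto simp: s_def)
  finally have "norm y * norm y \<le> (s / I) * (norm y * norm y)" by (simp add: field_simps)
  moreover have "s / I < 1" using sI I0 by (simp add: I_def)
  moreover have "norm y * norm y > 0" using y0 by simp
  ultimately show False by (smt (verit) mult_less_cancel_right2)
qed



lemma quad_cs:
  fixes a b d :: real
  assumes q: "\<And>t. 0 \<le> a + 2*t*b + t^2*d" and d: "d \<ge> 0"
  shows "b^2 \<le> a*d"
proof (cases "d = 0")
  case True
  have "b = 0"
  proof (rule ccontr)
    assume b: "b \<noteq> 0"
    have "0 \<le> a + 2*(-(a+1)/(2*b))*b" using q[of "-(a+1)/(2*b)"] True by simp
    also have "\<dots> = -1" using b by (simp add: field_simps)
    finally show False by simp
  qed
  then show ?thesis using True by simp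
next
  case False
  then have dp: "d > 0" using d by simp
  have "0 \<le> a + 2*(-b/d)*b + (-b/d)^2*d" by (rule q)
  also have "\<dots> = a - b^2/d" using dp by (simp add: field_simps power2_eq_square)
  finally show ?thesis using dp by (simp add: field_simps)
qed

lemma adjoint_formula:
  fixes L :: "'a::euclidean_space \<Rightarrow> 'b::euclidean_space"
  assumes "linear L"
  shows "adjoint L u = (\<Sum>i\<in>Basis. (L i \<bullet> u) *\<^sub>R i)"
proof -
  have "adjoint L u = (\<Sum>i\<in>Basis. (adjoint L u \<bullet> i) *\<^sub>R i)" by (simp add: euclidean_representation)
  also have "\<dots> = (\<Sum>i\<in>Basis. (L i \<bullet> u) *\<^sub>R i)"
    using adjoint_works[OF assms] by (simp add: inner_commute)
  finally show ?thesis .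
qed

lemma adjoint_norm:
  fixes L :: "'a::euclidean_space \<Rightarrow> 'b::euclidean_space"
  assumes lin: "linear L"
  shows "norm (adjoint L y) \<le> onorm L * norm y"
proof -
  have bl: "bounded_linear L" using lin linear_conv_bounded_linear by blast
  have "norm (adjoint L y)^2 = L (adjoint L y) \<bullet> y" using adjoint_works[OF lin, of "adjoint L y" y]
    by (simp add: power2_norm_eq_inner)
  also have "\<dots> \<le> norm (L (adjoint L y)) * norm y" by (rule Cauchy_Schwarz_ineq2[THEN abs_le_D1])
  also have "\<dots> \<le> onorm L * norm (adjoint L y) * norm y" using onorm[OF bl] by (simp add: mult_right_mono)
  finally have "norm (adjoint L y) * norm (adjoint L y) \<le> (onorm L * norm y) * norm (adjoint L y)"
    by (simp add: power2_eq_square algebra_simps)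
  then show ?thesis
    by (cases "adjoint L y = 0") (auto simp: onorm_pos_le[OF bl] mult_le_cancel_right)
qed

lemma contraction:
  fixes L :: "'a::euclidean_space \<Rightarrow> 'b::euclidean_space"
  assumes lin: "linear L" and sig: "\<And>y. s * norm y \<le> norm (adjoint L y)" and s0: "s \<ge> 0"
    and c0: "c \<ge> 0" and c1: "c * (onorm L)^2 \<le> 1"
  shows "norm (y - c *\<^sub>R L (adjoint L y)) \<le> (1 - c * s^2) * norm y"
proof -
  define A where "A = adjoint L"
  have linA: "linear A" unfolding A_def using adjoint_linear[OF lin] .
  define B where "B x z = x \<bullet> z - c * (A x \<bullet> A z)" for x z
  define N where "N z = z - c *\<^sub>R L (A z)" for z
  define lam where "lam = 1 - c * s^2"
  have BN: "x \<bullet> N z = B x z" for x z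
    using adjoint_works[OF lin, of "A z" x] unfolding B_def N_def A_def
    by (simp add: inner_diff_right inner_commute)
  have Bge: "B z z \<ge> 0" for z
  proof -
    have "norm (A z) \<le> onorm L * norm z" unfolding A_def by (rule adjoint_norm[OF lin])
    then have "norm (A z)^2 \<le> (onorm L * norm z)^2" by (simp add: power_mono)
    then have "c * norm (A z)^2 \<le> c * (onorm L)^2 * norm z^2" using c0 by (simp add: mult_left_mono power_mult_distrib mult.assoc)
    also have "\<dots> \<le> norm z^2" using mult_right_mono[OF c1, of "norm z^2"] by simp
    finally show ?thesis unfolding B_def by (simp add: power2_norm_eq_inner)
  qed
  have Ble: "B z z \<le> lam * norm z^2" for z
  proof -
    have "(s * norm z)^2 \<le> norm (A z)^2" using sig[of z] s0 unfolding A_def by (simp add: power_mono)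
    then have "c * (s * norm z)^2 \<le> c * norm (A z)^2" using c0 by (simp add: mult_left_mono)
    then show ?thesis unfolding B_def lam_def by (simp add: power2_norm_eq_inner[symmetric] algebra_simps power_mult_distrib)
  qed
  have lam0: "lam \<ge> 0"
  proof -
    obtain b :: 'b where "b \<in> Basis" using nonempty_Basis by blast
    then have "norm b = 1" by simp
    then show ?thesis using Bge[of b] Ble[of b] by simp
  qed
  have CS: "(B x z)^2 \<le> B x x * B z z" for x z
  proof (rule quad_cs[OF _ Bge])
    fix t
    have "B (x + t *\<^sub>R z) (x + t *\<^sub>R z) = B x x + 2*t*B x z + t^2 * B z z"
      unfolding B_def using linA
      by (simp add: linear_add linear_scale inner_add_left inner_add_right inner_commute power2_eq_square algebra_simps)
    then show "0 \<le> B x x + 2*t*B x z + t^2 * B z z" using Bge by metis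
  qed
  define n where "n = norm (N y)"
  have "n^2 = B (N y) y" unfolding n_def using BN[of "N y" y] by (simp add: power2_norm_eq_inner)
  then have "n^2 * n^2 \<le> B (N y) (N y) * B y y" using CS[of "N y" y] by (simp add: power2_eq_square)
  also have "\<dots> \<le> (lam * n^2) * (lam * norm y^2)"
    using Ble Bge lam0 by (intro mult_mono) (auto simp: n_def)
  finally have "n^2 * n^2 \<le> (lam * norm y)^2 * n^2" by (simp add: power2_eq_square algebra_simps)
  then have "n^2 \<le> (lam * norm y)^2"
  proof (cases "n = 0")
    case False
    show ?thesis by (rule mult_right_le_imp_le[OF \<open>n^2 * n^2 \<le> (lam * norm y)^2 * n^2\<close>]) (simp add: False)
  qed simp
  then have "n \<le> lam * norm y" using lam0 by (simp add: n_def power2_le_iff_abs_le)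
  then show ?thesis unfolding n_def N_def lam_def A_def .
qed

lemma pinv_normal:
  fixes L :: "'a::euclidean_space \<Rightarrow> 'b::euclidean_space"
  assumes lin: "linear L" and inj: "inj (\<lambda>u. L (adjoint L u))" and eq: "L (adjoint L u) = L y"
  shows "pinv (adjoint L) y = u"
proof -
  define A where "A = adjoint L"
  have linA: "linear A" unfolding A_def using adjoint_linear[OF lin] .
  have expand: "norm (A w - y)^2 = norm (A u - y)^2 + norm (A (w - u))^2" for w
  proof -
    have "A w - y = (A u - y) + A (w - u)" using linA by (simp add: linear_diff)
    moreover have "(A u - y) \<bullet> A (w - u) = 0"
    proof -
      have "(A u - y) \<bullet> A (w - u) = L (A u - y) \<bullet> (w - u)"
        using adjoint_works[OF lin, of "A u - y" "w - u"] unfolding A_def by simp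
      also have "L (A u - y) = 0" using eq lin unfolding A_def by (simp add: linear_diff)
      finally show ?thesis by simp
    qed
    moreover have g: "\<And>a b::'a. a \<bullet> b = 0 \<Longrightarrow> norm (a+b)^2 = norm a^2 + norm b^2"
      by (simp add: power2_norm_eq_inner inner_add_left inner_add_right inner_commute)
    ultimately show ?thesis by metis
  qed
  have lsq_u: "lsq A y u" unfolding lsq_def
  proof
    fix w show "norm (A u - y) \<le> norm (A w - y)"
    proof (rule power2_le_imp_le)
      show "norm (A u - y)^2 \<le> norm (A w - y)^2" using expand[of w] zero_le_power2[of "norm (A (w - u))"] by linarith
    qed simp
  qed
  have uniq: "w = u" if "lsq A y w" for w
  proof -
    have "norm (A w - y) \<le> norm (A u - y)" using that unfolding lsq_def by blast
    then have "norm (A w - y)^2 \<le> norm (A u - y)^2" by (simp add: power_mono)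
    then have "A (w - u) = 0" using expand[of w] by simp
    then have "L (A w) = L (A u)" using linA lin by (simp add: linear_diff)
    then show "w = u" using inj unfolding A_def by (simp add: inj_def)
  qed
  show ?thesis unfolding pinv_def A_def[symmetric]
  proof (rule the_equality)
    show "lsq A y u \<and> (\<forall>w. lsq A y w \<longrightarrow> norm u \<le> norm w)" using lsq_u uniq by blast
  next
    fix u' assume "lsq A y u' \<and> (\<forall>w. lsq A y w \<longrightarrow> norm u' \<le> norm w)"
    then show "u' = u" using uniq by blast
  qed
qed



lemma smooth_CkU: "smooth F \<Longrightarrow> CkU k U F"
  unfolding smooth_def using Ck_imp_CkU by blast

lemma smooth_dir: "smooth F \<Longrightarrow> CkU k U (\<lambda>x. Dif F x v)"
proof -
  assume "smooth F"
  then have "Ck (Suc k) F" unfolding smooth_def by blast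
  then have "Ck k (\<lambda>x. frechet_derivative F (at x) v)" by simp
  then show ?thesis unfolding Dif_def by (rule Ck_imp_CkU)
qed

lemma smooth_deriv: "smooth F \<Longrightarrow> (F has_derivative Dif F x) (at x)"
  using CkU_hasderiv[of 0 UNIV F x] smooth_CkU by blast

lemma grad_formula:
  fixes F :: "'a::euclidean_space \<Rightarrow> real"
  assumes d: "(F has_derivative F') (at x)"
  shows "grad F x = (\<Sum>i\<in>Basis. F' i *\<^sub>R i)" "\<And>v. F' v = v \<bullet> grad F x"
proof -
  define G0 where "G0 = (\<Sum>i\<in>Basis. F' i *\<^sub>R i)"
  have lin: "linear F'" using d has_derivative_bounded_linear linear_conv_bounded_linear by blast
  have F'v: "F' v = v \<bullet> G0" for v
    using lin_expand[OF lin, of v] by (simp add: G0_def inner_sum_right mult.commute)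
  have "F' = (\<lambda>h. h \<bullet> G0)" using F'v by auto
  then have gd: "GDERIV F x :> G0" using d by (simp add: gderiv_def)
  have gG: "grad F x = G0" unfolding grad_def
  proof (rule the_equality[where P="\<lambda>D. GDERIV F x :> D", OF gd])
    fix D assume "GDERIV F x :> D"
    then have "(\<lambda>h. h \<bullet> D) = (\<lambda>h. h \<bullet> G0)" using has_derivative_unique gd unfolding gderiv_def by blast
    then have bb: "\<And>b. b \<bullet> D = b \<bullet> G0" by metis
    show "D = G0"
    proof (rule euclidean_eqI)
      fix b :: 'a assume "b \<in> Basis"
      show "D \<bullet> b = G0 \<bullet> b" using bb[of b] by (simp only: inner_commute)
    qed
  qed
  show "grad F x = (\<Sum>i\<in>Basis. F' i *\<^sub>R i)" using gG by (simp only: G0_def)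
  show "\<And>v. F' v = v \<bullet> grad F x" using F'v gG by simp
qed

definition Mop :: "('a::euclidean_space \<Rightarrow> 'b::euclidean_space) \<Rightarrow> 'a \<Rightarrow> 'b \<Rightarrow> 'b" where
  "Mop h z u = (\<Sum>i\<in>Basis. (u \<bullet> Dif h z i) *\<^sub>R Dif h z i)"

lemma Mop_linear: "linear (Mop h z)"
  unfolding Mop_def
  by (intro linear_compose_sum linear_scaleR_left) (auto intro!: linearI simp: inner_add_left scaleR_add_left)

lemma Mop_adj:
  assumes "linear (Dif h z)"
  shows "Dif h z (adjoint (Dif h z) u) = Mop h z u"
  using assms by (simp add: adjoint_formula Mop_def linear_sum linear_scale inner_commute)

lemma Mop_inner:
  assumes "linear (Dif h z)"
  shows "u \<bullet> Mop h z u = norm (adjoint (Dif h z) u)^2"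
  using adjoint_works[OF assms, of "adjoint (Dif h z) u" u] Mop_adj[OF assms, of u]
  by (simp add: power2_norm_eq_inner inner_commute)

context
  fixes f :: "'a::euclidean_space \<Rightarrow> real" and h :: "'a \<Rightarrow> 'b::euclidean_space"
  assumes sf: "smooth f" and sh: "smooth h"
begin

definition "Uset = {z. inj (Mop h z)}"

lemma linDh: "linear (Dif h z)"
  using smooth_deriv[OF sh] has_derivative_bounded_linear linear_conv_bounded_linear by blast

lemma Mop_cols: "open U \<Longrightarrow> CkU k U (\<lambda>z. Mop h z b)"
  unfolding Mop_def
  by (intro CkU_sum CkU_scaleR CkU_inner CkU_const smooth_dir[OF sh]) auto

lemma U_open: "open Uset"
  unfolding open_dist
proof
  fix z0 assume z0: "z0 \<in> Uset"
  have c: "continuous (at z0) (\<lambda>z. Mop h z b)" for b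
    using CkU_cont[OF Mop_cols[OF open_UNIV, of 0 b]] continuous_on_eq_continuous_at by blast
  obtain c d where cd: "c > 0" "d > 0" "\<And>z u. dist z z0 < d \<Longrightarrow> c * norm u \<le> norm (Mop h z u)"
    using local_lower_bound[OF Mop_linear c] z0 unfolding Uset_def by blast
  have "z \<in> Uset" if "dist z z0 < d" for z
    unfolding Uset_def
  proof (simp, rule injI)
    fix u w assume "Mop h z u = Mop h z w"
    then have "Mop h z (u - w) = 0" by (simp add: linear_diff[OF Mop_linear])
    then have "c * norm (u - w) \<le> 0" using cd(3)[OF that, of "u - w"] by simp
    then show "u = w" using cd(1) by (simp add: mult_le_0_iff)
  qed
  then show "\<exists>e>0. \<forall>y. dist y z0 < e \<longrightarrow> y \<in> Uset" using cd(2) by blast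
qed

lemma gradf: "grad f z = (\<Sum>i\<in>Basis. Dif f z i *\<^sub>R i)" "\<And>v. Dif f z v = v \<bullet> grad f z"
  using grad_formula[OF smooth_deriv[OF sf]] by auto

lemma wf_eq: "Dif h z (grad f z) = (\<Sum>i\<in>Basis. Dif f z i *\<^sub>R Dif h z i)"
  using linDh[of z] by (simp add: gradf(1) linear_sum linear_scale)

lemma lam_eq: assumes "z \<in> Uset" shows "Mop h z (lam f h z) = Dif h z (grad f z)"
proof -
  have inj: "inj (Mop h z)" using assms by (simp add: Uset_def)
  have "surj (Mop h z)" using linear_inj_imp_surj[OF Mop_linear inj] .
  then obtain u where u: "Mop h z u = Dif h z (grad f z)" by (metis surjD)
  have inj2: "inj (\<lambda>u. Dif h z (adjoint (Dif h z) u))" using inj by (simp add: Mop_adj[OF linDh])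
  have "lam f h z = u" unfolding lam_def
    by (rule pinv_normal[OF linDh inj2]) (simp add: Mop_adj[OF linDh] u)
  then show ?thesis using u by simp
qed

lemma lam_Ck: "CkU k Uset (lam f h)"
proof (rule CkU_solve[OF U_open Mop_linear])
  show "\<And>z. z \<in> Uset \<Longrightarrow> inj (Mop h z)" by (simp add: Uset_def)
  show "\<And>b. b \<in> Basis \<Longrightarrow> CkU k Uset (\<lambda>z. Mop h z b)" by (rule Mop_cols[OF U_open])
  show "CkU k Uset (\<lambda>z. \<Sum>i\<in>Basis. Dif f z i *\<^sub>R Dif h z i)"
    by (intro CkU_sum CkU_scaleR smooth_dir sf sh U_open) auto
  show "\<And>z. z \<in> Uset \<Longrightarrow> Mop h z (lam f h z) = (\<Sum>i\<in>Basis. Dif f z i *\<^sub>R Dif h z i)"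
    using lam_eq wf_eq by simp
qed

lemma g_expr: "gfun f h \<beta> = (\<lambda>z. f z - h z \<bullet> lam f h z + \<beta> * (h z \<bullet> h z))"
  unfolding gfun_def by (simp add: power2_norm_eq_inner)

lemma g_Ck: "CkU k Uset (gfun f h \<beta>)"
  unfolding g_expr
  by (intro CkU_add CkU_diff CkU_mult CkU_inner CkU_const smooth_CkU sf sh lam_Ck U_open)

lemma g_deriv: assumes "z \<in> Uset"
  shows "(gfun f h \<beta> has_derivative Dif (gfun f h \<beta>) z) (at z)"
  using CkU_hasderiv[OF g_Ck[of "Suc 0"] assms] by simp

lemma gradg_Ck: "CkU k Uset (grad (gfun f h \<beta>))"
proof (rule CkU_cong[OF U_open])
  show "CkU k Uset (\<lambda>z. \<Sum>i\<in>Basis. Dif (gfun f h \<beta>) z i *\<^sub>R i)"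
    using g_Ck[of "Suc k"] by (intro CkU_sum CkU_scaleR CkU_const U_open) auto
  show "\<And>z. z \<in> Uset \<Longrightarrow> (\<Sum>i\<in>Basis. Dif (gfun f h \<beta>) z i *\<^sub>R i) = grad (gfun f h \<beta>) z"
    using grad_formula(1)[OF g_deriv] by simp
qed

lemma g_dir: assumes "z \<in> Uset"
  shows "Dif (gfun f h \<beta>) z v = v \<bullet> grad (gfun f h \<beta>) z"
  using grad_formula(2)[OF g_deriv[OF assms]] by simp

lemma lam_deriv: assumes "z \<in> Uset" shows "(lam f h has_derivative Dif (lam f h) z) (at z)"
  using CkU_hasderiv[OF lam_Ck[of "Suc 0"] assms] by simp

lemma g_dir_formula: assumes "z \<in> Uset"
  shows "Dif (gfun f h \<beta>) z v = Dif f z v - (Dif h z v \<bullet> lam f h z + h z \<bullet> Dif (lam f h) z v) + \<beta> * (2 * (h z \<bullet> Dif h z v))"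
proof -
  have d: "((\<lambda>z. f z - h z \<bullet> lam f h z + \<beta> * (h z \<bullet> h z)) has_derivative
     (\<lambda>v. Dif f z v - (h z \<bullet> Dif (lam f h) z v + Dif h z v \<bullet> lam f h z) + \<beta> * (h z \<bullet> Dif h z v + Dif h z v \<bullet> h z))) (at z)"
    by (intro has_derivative_add has_derivative_diff has_derivative_inner has_derivative_mult_right
        smooth_deriv[OF sf] smooth_deriv[OF sh] lam_deriv[OF assms])
  have "Dif (gfun f h \<beta>) z = (\<lambda>v. Dif f z v - (h z \<bullet> Dif (lam f h) z v + Dif h z v \<bullet> lam f h z) + \<beta> * (h z \<bullet> Dif h z v + Dif h z v \<bullet> h z))"
    using frechet_derivative_at[OF d] unfolding g_expr Dif_def by simp
  then show ?thesis by (simp add: inner_commute algebra_simps)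
qed

end



lemma sigma_max_nonneg:
  fixes L :: "'a::euclidean_space \<Rightarrow> 'b::euclidean_space"
  assumes lin: "linear L"
  shows "sigma_max L \<ge> 0"
proof -
  obtain b :: 'a where "b \<in> Basis" using nonempty_Basis by blast
  then have "norm b = 1" by simp
  then show ?thesis using sigma_max_bound[OF lin, of b] norm_ge_zero[of "L b"] by (metis mult.right_neutral order.trans)
qed

lemma step_bound:
  fixes L :: "'a::euclidean_space \<Rightarrow> 'b::euclidean_space" and Dl :: "'a \<Rightarrow> 'b"
  assumes lin: "linear L" and bDl: "bounded_linear Dl"
    and sigpos: "sigma_min L > 0"
    and Gv: "\<And>v. G \<bullet> v = gf \<bullet> v - (L v \<bullet> lam0 + hx \<bullet> Dl v) + \<beta> * (2 * (hx \<bullet> L v))"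
    and normal: "L gf = L (adjoint L lam0)"
    and A3x: "\<And>v. norm (hnew v - hx - L v) \<le> Ch * (norm v)^2"
    and t0: "t \<ge> 0" and tthird: "2*\<beta>*t*(onorm L)^2 \<le> 1" and b0: "\<beta> \<ge> 0"
  shows "norm (hnew (- (t *\<^sub>R G))) \<le> (1 - t*(2*\<beta>*(sigma_min L)^2 - sigma_max L * onorm Dl)) * norm hx + Ch * t^2 * (norm G)^2"
proof -
  define \<sigma> where "\<sigma> = sigma_min L"
  define \<sigma>1 where "\<sigma>1 = sigma_max L"
  define Cl where "Cl = onorm Dl"
  define A where "A = adjoint L"
  have linA: "linear A" unfolding A_def by (rule adjoint_linear[OF lin])
  have Av: "A y \<bullet> v = L v \<bullet> y" for y v
    using adjoint_works[OF lin, of v y] unfolding A_def by (simp add: inner_commute)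
  define q where "q = G - gf + A lam0 - (2*\<beta>) *\<^sub>R A hx"
  have qv: "q \<bullet> v = - (hx \<bullet> Dl v)" for v
    unfolding q_def using Gv[of v] by (simp add: inner_diff_left inner_add_left Av algebra_simps inner_commute[of hx])
  have qn: "norm q \<le> Cl * norm hx"
  proof -
    have "norm q ^ 2 = - (hx \<bullet> Dl q)" using qv[of q] by (simp add: power2_norm_eq_inner)
    also have "\<dots> \<le> norm hx * norm (Dl q)" using Cauchy_Schwarz_ineq2[of hx "Dl q"] by linarith
    also have "\<dots> \<le> norm hx * (Cl * norm q)" unfolding Cl_def using onorm[OF bDl, of q] by (simp add: mult_left_mono)
    finally have "norm q * norm q \<le> (Cl * norm hx) * norm q" by (simp add: power2_eq_square algebra_simps)
    then show ?thesis
      by (cases "q = 0") (auto simp: Cl_def onorm_pos_le[OF bDl] mult_le_cancel_right)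
  qed
  have LG: "L G = L q + (2*\<beta>) *\<^sub>R L (A hx)"
  proof -
    have "G = q + gf - A lam0 + (2*\<beta>) *\<^sub>R A hx" unfolding q_def by simp
    then have "L G = L q + L gf - L (A lam0) + (2*\<beta>) *\<^sub>R L (A hx)"
      using lin by (simp add: linear_add linear_diff linear_scale)
    then show ?thesis using normal unfolding A_def by simp
  qed
  define c where "c = 2*\<beta>*t"
  have c0: "c \<ge> 0" using b0 t0 by (simp add: c_def)
  have e1: "norm (hx - c *\<^sub>R L (A hx)) \<le> (1 - c * \<sigma>^2) * norm hx"
    unfolding A_def \<sigma>_def
    by (rule contraction[OF lin sigma_min_bound[OF lin sigpos]]) (use sigpos c0 tthird in \<open>auto simp: c_def\<close>)
  have s1: "\<sigma>1 \<ge> 0" unfolding \<sigma>1_def by (rule sigma_max_nonneg[OF lin])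
  have e2: "norm (t *\<^sub>R L q) \<le> t * (\<sigma>1 * Cl) * norm hx"
  proof -
    have "norm (t *\<^sub>R L q) = t * norm (L q)" using t0 by simp
    also have "norm (L q) \<le> \<sigma>1 * norm q" unfolding \<sigma>1_def by (rule sigma_max_bound[OF lin])
    also have "\<sigma>1 * norm q \<le> \<sigma>1 * (Cl * norm hx)" using qn s1 by (simp add: mult_left_mono)
    finally show ?thesis using t0 by (simp add: mult_left_mono mult.assoc)
  qed
  define E where "E = hnew (- (t *\<^sub>R G)) - hx - L (- (t *\<^sub>R G))"
  have e3: "norm E \<le> Ch * t^2 * (norm G)^2"
    using A3x[of "- (t *\<^sub>R G)"] t0 unfolding E_def by (simp add: power_mult_distrib)
  have decomp: "hnew (- (t *\<^sub>R G)) = (hx - c *\<^sub>R L (A hx)) - t *\<^sub>R L q + E"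
    unfolding E_def c_def using lin LG by (simp add: linear_neg linear_scale algebra_simps)
  have "norm (hnew (- (t *\<^sub>R G))) \<le> norm (hx - c *\<^sub>R L (A hx)) + norm (t *\<^sub>R L q) + norm E"
    unfolding decomp using norm_triangle_ineq[of "hx - c *\<^sub>R L (A hx) - t *\<^sub>R L q" E]
      norm_triangle_ineq4[of "hx - c *\<^sub>R L (A hx)" "t *\<^sub>R L q"] by linarith
  also have "\<dots> \<le> (1 - c * \<sigma>^2) * norm hx + t * (\<sigma>1 * Cl) * norm hx + Ch * t^2 * (norm G)^2"
    using e1 e2 e3 by linarith
  also have "\<dots> = (1 - t*(2*\<beta>*\<sigma>^2 - \<sigma>1 * Cl)) * norm hx + Ch * t^2 * (norm G)^2"
    by (simp add: c_def algebra_simps)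
  finally show ?thesis unfolding \<sigma>_def \<sigma>1_def Cl_def .
qed



lemma t1_arith:
  fixes a R Ch \<delta> t Gn :: real
  assumes a: "0 \<le> a" "a \<le> R" and R: "R > 0" and Ch: "Ch > 0" and d: "\<delta> > 0" and t0: "t \<ge> 0" and Gn: "Gn > 0"
    and ta: "t \<le> sqrt (R / (2*Ch)) / Gn" and tb: "t \<le> (\<delta> * R) / (2*Ch*Gn^2)"
  shows "(1 - t*\<delta>)*a + Ch*t^2*Gn^2 \<le> R"
proof -
  have "t * Gn \<le> sqrt (R / (2*Ch))" using ta Gn by (simp add: le_divide_eq)
  then have "(t*Gn)^2 \<le> R / (2*Ch)" using t0 Gn R Ch
    by (metis less_imp_le mult_nonneg_nonneg power2_le_imp_le real_sqrt_le_iff real_sqrt_pow2 zero_le_divide_iff zero_le_numeral mult_pos_pos power_mono real_sqrt_ge_zero)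
  then have c1: "Ch*t^2*Gn^2 \<le> R/2" using Ch by (simp add: field_simps power_mult_distrib)
  have "t * (2*Ch*Gn^2) \<le> \<delta> * R" using tb Ch Gn by (simp add: le_divide_eq)
  then have "(t/2) * (t * (2*Ch*Gn^2)) \<le> (t/2) * (\<delta> * R)" using t0 by (intro mult_left_mono) auto
  then have c2: "Ch*t^2*Gn^2 \<le> t*\<delta>*R/2" by (simp add: power2_eq_square algebra_simps)
  have td: "t*\<delta> \<ge> 0" using t0 d by simp
  show ?thesis
  proof (cases "a \<le> R/2")
    case True
    have "t*\<delta>*a \<ge> 0" using td a by simp
    then have "(1 - t*\<delta>)*a \<le> a" by (simp add: algebra_simps)
    then show ?thesis using c1 True by linarith
  next
    case False
    have "t*\<delta>*a \<ge> t*\<delta>*(R/2)" using False td by (intro mult_left_mono) auto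
    then have "(1 - t*\<delta>)*a \<le> R - t*\<delta>*R/2" using a by (simp add: algebra_simps)
    then show ?thesis using c2 by linarith
  qed
qed

lemma descent:
  fixes g :: "'a::euclidean_space \<Rightarrow> real" and Gr :: "'a \<Rightarrow> 'a"
  assumes S: "\<And>s. 0 \<le> s \<Longrightarrow> s \<le> \<alpha> \<Longrightarrow> x - s *\<^sub>R G \<in> S"
    and gd: "\<And>y. y \<in> S \<Longrightarrow> (g has_derivative (\<lambda>v. v \<bullet> Gr y)) (at y)"
    and Grd: "\<And>y. y \<in> S \<Longrightarrow> (Gr has_derivative DG y) (at y)"
    and bnd: "\<And>y. y \<in> S \<Longrightarrow> onorm (DG y) \<le> Lb"
    and G: "G = Gr x" and a0: "\<alpha> \<ge> 0"
  shows "g x - g (x - \<alpha> *\<^sub>R G) \<ge> \<alpha> * (norm G)^2 - Lb * \<alpha>^2 * (norm G)^2 / 2"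
proof (cases "\<alpha> = 0")
  case True then show ?thesis by simp
next
  case False
  then have ap: "\<alpha> > 0" using a0 by simp
  define P where "P = closed_segment x (x - \<alpha> *\<^sub>R G)"
  have inP: "x - s *\<^sub>R G \<in> P" if "0 \<le> s" "s \<le> \<alpha>" for s
  proof -
    have "x - s *\<^sub>R G = (1 - s/\<alpha>) *\<^sub>R x + (s/\<alpha>) *\<^sub>R (x - \<alpha> *\<^sub>R G)"
      using ap by (simp add: algebra_simps)
    moreover have "0 \<le> s/\<alpha>" "s/\<alpha> \<le> 1" using that ap by auto
    ultimately show ?thesis unfolding P_def closed_segment_def by blast
  qed
  have PS: "P \<subseteq> S"
  proof
    fix y assume "y \<in> P"
    then obtain u where u: "0 \<le> u" "u \<le> 1" "y = (1 - u) *\<^sub>R x + u *\<^sub>R (x - \<alpha> *\<^sub>R G)"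
      unfolding P_def closed_segment_def by blast
    have "y = x - (u*\<alpha>) *\<^sub>R G" using u(3) by (simp add: algebra_simps)
    moreover have "0 \<le> u*\<alpha>" "u*\<alpha> \<le> \<alpha>" using u ap by (auto simp: mult_left_le_one_le)
    ultimately show "y \<in> S" using S by blast
  qed
  have lip: "norm (Gr (x - s *\<^sub>R G) - Gr x) \<le> Lb * (s * norm G)" if "0 \<le> s" "s \<le> \<alpha>" for s
  proof -
    have "norm (Gr (x - s *\<^sub>R G) - Gr x) \<le> Lb * norm ((x - s *\<^sub>R G) - x)"
      by (rule differentiable_bound[of P Gr DG])
        (use PS inP that ap in \<open>auto simp: P_def intro: has_derivative_at_withinI Grd bnd\<close>)
    then show ?thesis using that by simp
  qed
  define \<phi> where "\<phi> s = g (x - s *\<^sub>R G) + s * (norm G)^2 - Lb * s^2 * (norm G)^2 / 2" for s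
  have "\<phi> \<alpha> \<le> \<phi> 0"
  proof (rule DERIV_nonpos_imp_nonincreasing[OF a0])
    fix s assume s: "0 \<le> s" "s \<le> \<alpha>"
    define y where "y = x - s *\<^sub>R G"
    have yS: "y \<in> S" using S s by (simp add: y_def)
    have d1: "((\<lambda>s. x - s *\<^sub>R G) has_derivative (\<lambda>h. - (h *\<^sub>R G))) (at s)"
      by (auto intro!: derivative_eq_intros)
    have d2: "((\<lambda>s. g (x - s *\<^sub>R G)) has_derivative (\<lambda>h. (- (h *\<^sub>R G)) \<bullet> Gr y)) (at s)"
      using has_derivative_compose[OF d1 gd[OF yS[unfolded y_def]]] by (simp add: y_def)
    have d3: "((\<lambda>s. g (x - s *\<^sub>R G)) has_real_derivative (- (G \<bullet> Gr y))) (at s)"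
    proof -
      have "(\<lambda>h. (- (h *\<^sub>R G)) \<bullet> Gr y) = (*) (- (G \<bullet> Gr y))" by (auto simp: fun_eq_iff)
      then show ?thesis unfolding has_field_derivative_def using d2 by simp
    qed
    have "DERIV \<phi> s :> (- (G \<bullet> Gr y)) + (norm G)^2 - Lb * (2 * s) * (norm G)^2 / 2"
      unfolding \<phi>_def by (auto intro!: derivative_eq_intros d3)
    moreover have "(- (G \<bullet> Gr y)) + (norm G)^2 - Lb * (2 * s) * (norm G)^2 / 2 \<le> 0"
    proof -
      have "(norm G)^2 - G \<bullet> Gr y = G \<bullet> (Gr x - Gr y)" using G by (simp add: inner_diff_right power2_norm_eq_inner)
      also have "\<dots> \<le> norm G * norm (Gr x - Gr y)" by (rule Cauchy_Schwarz_ineq2[THEN abs_le_D1])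
      also have "norm (Gr x - Gr y) \<le> Lb * (s * norm G)" using lip[OF s] by (simp add: y_def norm_minus_commute)
      then have "norm G * norm (Gr x - Gr y) \<le> norm G * (Lb * (s * norm G))" by (simp add: mult_left_mono)
      finally show ?thesis by (simp add: power2_eq_square algebra_simps)
    qed
    ultimately show "\<exists>y. DERIV \<phi> s :> y \<and> y \<le> 0" by blast
  qed
  then show ?thesis unfolding \<phi>_def by simp
qed



theorem mainTheorem8:
  fixes f :: "'a::euclidean_space \<Rightarrow> real" and h :: "'a \<Rightarrow> 'b::euclidean_space"
    and \<beta> R sig Ch a01 c1 \<tau>1 :: real and x :: 'a
  assumes f_smooth: "smooth f" and h_smooth: "smooth h"
    and A1: "R > 0" "sig > 0" "\<forall>y\<in>Cset h R. sigma_min (Dif h y) \<ge> sig"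
    and A2: "compact {y. h y = 0}" "compact (Cset h R)"
    and A3: "Ch > 0"
      "\<forall>y\<in>Cset h R. \<forall>v. norm (h (y + v) - h y - Dif h y v) \<le> Ch * (norm v)\<^sup>2"
    and params: "a01 > 0" "0 < c1" "c1 < 1" "0 < \<tau>1" "\<tau>1 < 1"
    and hx: "x \<in> Cset h R"
    and hbeta: "\<beta> \<ge> 0" "\<beta> > beta1 f h x"
  shows "bt_terminates f h \<beta> R a01 c1 \<tau>1 x
    \<and> \<tau>1 * min (alpha1 f h \<beta> R a01 c1) (t1 f h \<beta> R Ch x) > 0
    \<and> bt_step f h \<beta> R a01 c1 \<tau>1 x \<ge> \<tau>1 * min (alpha1 f h \<beta> R a01 c1) (t1 f h \<beta> R Ch x)
    \<and> gfun f h \<beta> x - gfun f h \<beta> (x - bt_step f h \<beta> R a01 c1 \<tau>1 x *\<^sub>R grad (gfun f h \<beta>) x)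
        \<ge> c1 * \<tau>1 * min (alpha1 f h \<beta> R a01 c1) (t1 f h \<beta> R Ch x) * (norm (grad (gfun f h \<beta>) x))\<^sup>2"
proof -
  note sf = f_smooth and sh = h_smooth
  define C where "C = Cset h R"
  define g where "g = gfun f h \<beta>"
  define G where "G = grad g x"
  define L where "L = Dif h x"
  define \<sigma> where "\<sigma> = sigma_min L"
  define \<sigma>1 where "\<sigma>1 = sigma_max L"
  define Cl where "Cl = C_lam f h x"
  define \<delta> where "\<delta> = 2*\<beta>*\<sigma>^2 - \<sigma>1 * Cl"
  define LG where "LG = Lg f h \<beta> R"
  have xC: "x \<in> C" using hx by (simp add: C_def)
  have linD: "\<And>z. linear (Dif h z)" using linDh[OF sf sh] .
  have CU: "C \<subseteq> Uset h"
  proof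
    fix y assume y: "y \<in> C"
    have sp: "sigma_min (Dif h y) > 0" using A1 y by (auto simp: C_def)
    show "y \<in> Uset h" unfolding Uset_def[OF sf sh]
    proof (simp, rule injI)
      fix u w assume "Mop h y u = Mop h y w"
      then have "Mop h y (u - w) = 0" by (simp add: linear_diff[OF Mop_linear])
      then have "norm (adjoint (Dif h y) (u - w))^2 = 0" using Mop_inner[OF linD[of y], of "u - w"] by simp
      then have "sigma_min (Dif h y) * norm (u - w) \<le> 0" using sigma_min_bound[OF linD sp, of "u - w"] by simp
      then show "u = w" using sp by (simp add: mult_le_0_iff)
    qed
  qed
  have xU: "x \<in> Uset h" using CU xC by blast
  have sigpos: "\<sigma> > 0" using A1 xC by (force simp: \<sigma>_def L_def C_def)
  define D where "D y = Dif (grad g) y" for y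
  have Dd: "(grad g has_derivative D y) (at y)" if "y \<in> Uset h" for y
    using CkU_hasderiv[OF gradg_Ck[OF sf sh, of "Suc 0" \<beta>] that] by (simp add: D_def g_def)
  have Dc: "continuous_on (Uset h) (\<lambda>y. D y v)" for v
    using gradg_Ck[OF sf sh, of "Suc 0" \<beta>] by (simp add: D_def g_def)
  define F where "F y = (\<Sum>i\<in>Basis. norm (D y i))" for y
  have Fc: "continuous_on C F" unfolding F_def
    by (intro continuous_on_sum continuous_on_norm continuous_on_subset[OF Dc CU])
  have "compact (F ` C)" using compact_continuous_image[OF Fc] A2(2) by (simp add: C_def)
  then obtain B where B: "\<And>y. y \<in> C \<Longrightarrow> F y \<le> B"
    using compact_imp_bounded bounded_real by (metis abs_le_D1 image_eqI)
  have onD: "onorm (D y) \<le> F y" if "y \<in> C" for y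
  proof (rule onorm_le)
    fix v
    have lin: "linear (D y)" using Dd[of y] that CU has_derivative_bounded_linear linear_conv_bounded_linear by blast
    have "norm (D y v - (\<lambda>_. 0) v) \<le> norm v * (\<Sum>b\<in>Basis. norm (D y b - (\<lambda>_. 0) b))"
      by (rule lin_diff_bound[OF lin]) (simp add: linear_zero)
    then show "norm (D y v) \<le> F y * norm v" by (simp add: F_def mult.commute)
  qed
  have bdd: "bdd_above ((\<lambda>y. onorm (D y)) ` C)"
    by (rule bdd_aboveI2[where M=B]) (use onD B in force)
  have LGb: "onorm (D y) \<le> LG" if "y \<in> C" for y
    unfolding LG_def Lg_def C_def[symmetric] D_def[symmetric] g_def[symmetric]
    by (rule cSup_upper) (use that bdd in auto)
  have LG0: "LG \<ge> 0"
  proof -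
    have "bounded_linear (D x)" using Dd[OF xU] has_derivative_bounded_linear by blast
    then show ?thesis using LGb[OF xC] onorm_pos_le by (metis order.trans)
  qed
  have bDl: "bounded_linear (Dif (lam f h) x)" using lam_deriv[OF sf sh xU] has_derivative_bounded_linear by blast
  have Gv: "G \<bullet> v = grad f x \<bullet> v - (L v \<bullet> lam f h x + h x \<bullet> Dif (lam f h) x v) + \<beta> * (2 * (h x \<bullet> L v))" for v
  proof -
    have "G \<bullet> v = Dif g x v" using g_dir[OF sf sh xU, of \<beta> v] by (simp add: G_def g_def inner_commute)
    also have "\<dots> = Dif f x v - (L v \<bullet> lam f h x + h x \<bullet> Dif (lam f h) x v) + \<beta> * (2 * (h x \<bullet> L v))"
      using g_dir_formula[OF sf sh xU] by (simp add: g_def L_def)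
    finally show ?thesis using gradf(2)[OF sf sh, of x v] by (simp add: inner_commute)
  qed
  have normal: "L (grad f x) = L (adjoint L (lam f h x))"
    using lam_eq[OF sf sh xU] Mop_adj[OF linD] by (simp add: L_def)
  have A3x: "norm (h (x + v) - h x - L v) \<le> Ch * (norm v)^2" for v using A3(2) xC by (simp add: C_def L_def)
  have s1: "\<sigma>1 \<ge> 0" unfolding \<sigma>1_def L_def by (rule sigma_max_nonneg[OF linD])
  have Cl0: "Cl \<ge> 0" unfolding Cl_def C_lam_def using onorm_pos_le[OF bDl] .
  have b1: "beta1 f h x = \<sigma>1 * Cl / (2 * \<sigma>^2)" by (simp add: beta1_def \<sigma>1_def Cl_def \<sigma>_def L_def)
  have dpos: "\<delta> > 0"
  proof -
    have "\<sigma>1 * Cl / (2 * \<sigma>^2) < \<beta>" using hbeta(2) b1 by simp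
    then have "\<sigma>1 * Cl < \<beta> * (2 * \<sigma>^2)" using sigpos by (simp add: divide_less_eq)
    then show ?thesis by (simp add: \<delta>_def algebra_simps)
  qed
  have bpos: "\<beta> > 0"
  proof -
    have "0 \<le> \<sigma>1 * Cl / (2 * \<sigma>^2)" using s1 Cl0 by simp
    then show ?thesis using hbeta(2) b1 by simp
  qed
  have onL: "onorm L \<ge> \<sigma>"
  proof -
    obtain b :: 'b where "b \<in> Basis" using nonempty_Basis by blast
    then have nb: "norm b = 1" by simp
    have "\<sigma> * norm b \<le> norm (adjoint L b)" unfolding \<sigma>_def by (rule sigma_min_bound[OF linD sigpos[unfolded \<sigma>_def L_def], folded L_def])
    also have "\<dots> \<le> onorm L * norm b" unfolding L_def by (rule adjoint_norm[OF linD])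
    finally show ?thesis using nb by simp
  qed
  define third where "third = 1 / (2 * \<beta> * (onorm L)^2)"
  have onpos: "onorm L > 0" using onL sigpos by linarith
  have third_pos: "third > 0" using bpos onpos by (simp add: third_def)
  define T1 where "T1 = t1 f h \<beta> R Ch x"
  have T1_eq: "T1 = (if G = 0 then third else min (min (sqrt (R / (2 * Ch)) / norm G)
                      (\<delta> * R / (2 * Ch * (norm G)^2))) third)"
    by (simp add: T1_def t1_def Let_def G_def g_def third_def L_def \<delta>_def \<sigma>_def \<sigma>1_def Cl_def)
  have T1pos: "T1 > 0"
  proof (cases "G = 0")
    case True then show ?thesis using T1_eq third_pos by simp
  next
    case False
    have "sqrt (R / (2 * Ch)) / norm G > 0" using False A1(1) A3(1) by simp
    moreover have "\<delta> * R / (2 * Ch * (norm G)^2) > 0" using False A1(1) A3(1) dpos by simp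
    ultimately show ?thesis using T1_eq third_pos False by simp
  qed
  have stepC: "x - t *\<^sub>R G \<in> C" if t0: "0 \<le> t" and tT: "t \<le> T1" for t
  proof (cases "G = 0")
    case True then show ?thesis using xC by simp
  next
    case False
    have tth: "t \<le> third" and ta: "t \<le> sqrt (R / (2 * Ch)) / norm G"
      and tb: "t \<le> \<delta> * R / (2 * Ch * (norm G)^2)" using tT T1_eq False by auto
    have tthird: "2*\<beta>*t*(onorm L)^2 \<le> 1"
    proof -
      have "t * (2 * \<beta> * (onorm L)^2) \<le> 1" using tth bpos onpos by (simp add: third_def le_divide_eq)
      then show ?thesis by (simp add: algebra_simps)
    qed
    have "norm (h (x + - (t *\<^sub>R G))) \<le> (1 - t*(2*\<beta>*(sigma_min L)^2 - sigma_max L * onorm (Dif (lam f h) x))) * norm (h x) + Ch * t^2 * (norm G)^2"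
      by (rule step_bound[where hnew="\<lambda>v. h (x + v)", OF linD[of x, folded L_def] bDl sigpos[unfolded \<sigma>_def] Gv normal A3x t0 tthird hbeta(1)])
    also have "\<dots> = (1 - t*\<delta>) * norm (h x) + Ch * t^2 * (norm G)^2"
      by (simp add: \<delta>_def \<sigma>_def \<sigma>1_def Cl_def C_lam_def)
    also have "\<dots> \<le> R"
      by (rule t1_arith) (use hx A1(1) A3(1) dpos t0 False ta tb in \<open>auto simp: Cset_def\<close>)
    finally show ?thesis by (simp add: C_def Cset_def)
  qed
  define A1v where "A1v = alpha1 f h \<beta> R a01 c1"
  have A1eq: "A1v = (if LG = 0 then a01 else min a01 (2 * (1 - c1) / LG))"
    by (simp add: A1v_def alpha1_def LG_def)
  have A1pos: "A1v > 0" using A1eq params LG0 by (auto simp: min_def)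
  have A1le: "A1v \<le> a01" using A1eq by auto
  have A1L: "LG * \<alpha> \<le> 2 * (1 - c1)" if "0 \<le> \<alpha>" "\<alpha> \<le> A1v" for \<alpha>
  proof (cases "LG = 0")
    case True then show ?thesis using params by simp
  next
    case False
    then have "LG > 0" using LG0 by simp
    moreover have "\<alpha> \<le> 2 * (1 - c1) / LG" using that A1eq False by auto
    ultimately show ?thesis by (simp add: le_divide_eq mult.commute)
  qed
  define m where "m = min A1v T1"
  have mpos: "m > 0" using A1pos T1pos by (simp add: m_def)
  have gder: "(g has_derivative (\<lambda>v. v \<bullet> grad g y)) (at y)" if "y \<in> C" for y
  proof -
    have yU: "y \<in> Uset h" using CU that by blast
    have "Dif g y = (\<lambda>v. v \<bullet> grad g y)" using g_dir[OF sf sh yU] by (auto simp: g_def)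
    then show ?thesis using g_deriv[OF sf sh yU, of \<beta>] by (simp add: g_def)
  qed
  have acc: "bt_accept f h \<beta> R c1 x \<alpha>" if a0: "0 < \<alpha>" and am: "\<alpha> \<le> m" for \<alpha>
  proof -
    have inC: "x - s *\<^sub>R G \<in> C" if "0 \<le> s" "s \<le> \<alpha>" for s
      using stepC that am by (simp add: m_def)
    have "g x - g (x - \<alpha> *\<^sub>R G) \<ge> \<alpha> * (norm G)^2 - LG * \<alpha>^2 * (norm G)^2 / 2"
      by (rule descent[where S=C and Gr="grad g" and DG=D])
        (use inC gder Dd CU LGb a0 in \<open>auto simp: G_def\<close>)
    moreover have "LG * \<alpha> \<le> 2 * (1 - c1)" using A1L a0 am by (simp add: m_def)
    then have "c1 * \<alpha> * (norm G)^2 \<le> \<alpha> * (norm G)^2 - LG * \<alpha>^2 * (norm G)^2 / 2"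
    proof -
      have "0 \<le> \<alpha> * (norm G)^2 * (2 * (1 - c1) - LG * \<alpha>)"
        using \<open>LG * \<alpha> \<le> 2 * (1 - c1)\<close> a0 by simp
      then show ?thesis by (simp add: algebra_simps power2_eq_square)
    qed
    ultimately have "c1 * \<alpha> * (norm G)^2 \<le> g x - g (x - \<alpha> *\<^sub>R G)" by linarith
    moreover have "x - \<alpha> *\<^sub>R G \<in> C" using inC a0 by simp
    ultimately show ?thesis unfolding bt_accept_def Let_def by (simp add: g_def G_def C_def)
  qed
  define P where "P k = bt_accept f h \<beta> R c1 x (a01 * \<tau>1 ^ k)" for k
  obtain n where n: "\<tau>1 ^ n < m / a01" using real_arch_pow_inv[of "m / a01" \<tau>1] mpos params by auto
  have Pn: "P n"
  proof -
    have "a01 * \<tau>1 ^ n < m" using n params by (simp add: less_divide_eq mult.commute)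
    moreover have "0 < a01 * \<tau>1 ^ n" using params by simp
    ultimately show ?thesis unfolding P_def by (intro acc) auto
  qed
  have btt: "bt_terminates f h \<beta> R a01 c1 \<tau>1 x" unfolding bt_terminates_def using Pn P_def by blast
  define k0 where "k0 = (LEAST k. P k)"
  have Pk0: "P k0" unfolding k0_def using Pn by (rule LeastI)
  define t where "t = a01 * \<tau>1 ^ k0"
  have t_eq: "bt_step f h \<beta> R a01 c1 \<tau>1 x = t" by (simp add: bt_step_def t_def k0_def P_def)
  have tge: "t \<ge> \<tau>1 * m"
  proof (cases k0)
    case 0
    have "m \<le> a01" using A1le by (simp add: m_def)
    then have "\<tau>1 * m \<le> 1 * a01" using params mpos by (intro mult_mono) auto
    then show ?thesis using 0 by (simp add: t_def)
  next
    case (Suc j)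
    have "\<not> P j" using Suc not_less_Least[of j P] unfolding k0_def by simp
    then have "\<not> (a01 * \<tau>1 ^ j \<le> m)" using acc params unfolding P_def by force
    then have "m < a01 * \<tau>1 ^ j" by simp
    then have "\<tau>1 * m \<le> \<tau>1 * (a01 * \<tau>1 ^ j)" using params by simp
    then show ?thesis using Suc by (simp add: t_def algebra_simps)
  qed
  have dec: "g x - g (x - t *\<^sub>R G) \<ge> c1 * t * (norm G)^2"
    using Pk0 unfolding P_def bt_accept_def Let_def t_def[symmetric] by (simp add: g_def G_def)
  have "c1 * (\<tau>1 * m) * (norm G)^2 \<le> c1 * t * (norm G)^2"
    using tge params by (intro mult_right_mono mult_left_mono) auto
  then have fin: "c1 * \<tau>1 * m * (norm G)^2 \<le> g x - g (x - t *\<^sub>R G)" using dec by (simp add: mult.assoc)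
  have mpos2: "\<tau>1 * m > 0" using mpos params by simp
  show ?thesis
    using btt mpos2 tge fin unfolding t_eq
    by (simp add: m_def A1v_def T1_def g_def G_def)
qed


end
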